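(* Let $q$ be a prime power and $d\ge 1$. The general linear group $\mathrm{GL}_d(\mathbb{F}_q)$ is mixable if and only if $q-1$ is a power of $2$.
   Context: A finite group $G$ is mixable if there exist fixed elements $g_1,\dots,g_k\in G$ and independent Bernoulli random variables $\epsilon_i\sim\mathrm{Ber}(p_i)$, $p_i\in[0,1]$, such that the random product $g_1^{\epsilon_1}\cdots g_k^{\epsilon_k}$ is distributed exactly uniformly on $G$. *)

theory Defs
  imports "HOL-Analysis.Analysis" "HOL-Algebra.Group"
begin

text \<open>Product g_0^(e_0) * ... * g_(k-1)^(e_(k-1)) in a monoid, where S is the set of indices i with e_i = 1.\<close>
definition word_prod :: "('g, 'b) monoid_scheme \<Rightarrow> (nat \<Rightarrow> 'g) \<Rightarrow> nat \<Rightarrow> nat set \<Rightarrow> 'g" where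
  "word_prod G gs k S = foldr (\<lambda>i acc. (if i \<in> S then gs i else \<one>\<^bsub>G\<^esub>) \<otimes>\<^bsub>G\<^esub> acc) [0..<k] \<one>\<^bsub>G\<^esub>"

text \<open>A finite group G is mixable if there are g_0..g_(k-1) in G and p_i in [0,1] such that,
  with independent e_i ~ Ber(p_i), the random product is exactly uniform on G.\<close>
definition mixable :: "('g, 'b) monoid_scheme \<Rightarrow> bool" where
  "mixable G \<longleftrightarrow> (\<exists>(k::nat) (gs::nat \<Rightarrow> 'g) (ps::nat \<Rightarrow> real).
      (\<forall>i<k. gs i \<in> carrier G \<and> 0 \<le> ps i \<and> ps i \<le> 1) \<and>
      (\<forall>x\<in>carrier G.
         (\<Sum>S\<in>Pow {..<k}. if word_prod G gs k S = x
                             then (\<Prod>i<k. if i \<in> S then ps i else 1 - ps i) else 0)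
         = 1 / real (card (carrier G))))"

definition GL_group :: "('a::field ^ 'n ^ 'n) monoid" where
  "GL_group = \<lparr>carrier = {A. invertible A}, mult = (**), one = mat 1\<rparr>"

end

theory Submission
  imports Defs "HOL-Algebra.Multiplicative_Group"
begin

fun wdist :: "('g,'b) monoid_scheme \<Rightarrow> ('g \<times> real) list \<Rightarrow> 'g \<Rightarrow> real" where
  "wdist G [] x = (if x = \<one>\<^bsub>G\<^esub> then 1 else 0)"
| "wdist G ((g,p)#w) x = (1-p) * wdist G w x + p * wdist G w (inv\<^bsub>G\<^esub> g \<otimes>\<^bsub>G\<^esub> x)"

lemma word_prod_Suc:
  "word_prod G gs (Suc k) S =
     (if 0 \<in> S then gs 0 else \<one>\<^bsub>G\<^esub>) \<otimes>\<^bsub>G\<^esub> word_prod G ((\<lambda>i. gs (Suc i))) k {i. Suc i \<in> S}"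
proof -
  have "[0..<Suc k] = 0 # map Suc [0..<k]"
    by (simp add: map_Suc_upt upt_conv_Cons)
  then show ?thesis unfolding word_prod_def
    by (simp add: foldr_map comp_def del: upt_Suc)
qed

lemma (in monoid) word_prod_closed:
  "(\<forall>i<k. gs i \<in> carrier G) \<Longrightarrow> word_prod G gs k S \<in> carrier G"
proof (induction k arbitrary: gs S)
  case 0
  then show ?case by (simp add: word_prod_def)
next
  case (Suc k)
  have "\<forall>i<k. ((\<lambda>i. gs (Suc i))) i \<in> carrier G" using Suc.prems by auto
  then have "word_prod G ((\<lambda>i. gs (Suc i))) k {i. Suc i \<in> S} \<in> carrier G" by (rule Suc.IH)
  then show ?case using Suc.prems by (simp add: word_prod_Suc)
qed

lemma Pow_image_Suc: "Pow (Suc ` A) = image Suc ` Pow A"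
  by (auto simp: subset_image_iff)

lemma sum_Pow_lessThan_Suc:
  fixes f :: "nat set \<Rightarrow> real"
  shows "(\<Sum>S\<in>Pow {..<Suc k}. f S) = (\<Sum>T\<in>Pow {..<k}. f (Suc ` T)) + (\<Sum>T\<in>Pow {..<k}. f (insert 0 (Suc ` T)))"
proof -
  have e: "{..<Suc k} = insert 0 (Suc ` {..<k})" by (rule lessThan_Suc_eq_insert_0)
  have d: "Pow (Suc ` {..<k}) \<inter> insert 0 ` Pow (Suc ` {..<k}) = {}" by blast
  have i1: "inj_on (image Suc) (Pow {..<k})" by (simp add: inj_on_def inj_image_eq_iff)
  have i2: "inj_on (insert 0) (Pow (Suc ` {..<k}))"
  proof (rule inj_onI)
    fix X Y assume "X \<in> Pow (Suc ` {..<k})" "Y \<in> Pow (Suc ` {..<k})" "insert 0 X = insert 0 Y"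
    moreover have "0 \<notin> X" "0 \<notin> Y" using calculation(1,2) by auto
    ultimately show "X = Y" using insert_ident by metis
  qed
  have "(\<Sum>S\<in>Pow {..<Suc k}. f S) = (\<Sum>S\<in>Pow (Suc ` {..<k}). f S) + (\<Sum>S\<in>insert 0 ` Pow (Suc ` {..<k}). f S)"
    unfolding e Pow_insert by (rule sum.union_disjoint) (simp_all add: d)
  also have "(\<Sum>S\<in>insert 0 ` Pow (Suc ` {..<k}). f S) = (\<Sum>S\<in>Pow (Suc ` {..<k}). f (insert 0 S))"
    by (rule sum.reindex_cong[OF i2 refl refl])
  also have "(\<Sum>S\<in>Pow (Suc ` {..<k}). f (insert 0 S)) = (\<Sum>T\<in>Pow {..<k}. f (insert 0 (Suc ` T)))"
    unfolding Pow_image_Suc by (subst sum.reindex[OF i1]) (simp add: o_def)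
  also have "(\<Sum>S\<in>Pow (Suc ` {..<k}). f S) = (\<Sum>T\<in>Pow {..<k}. f (Suc ` T))"
    unfolding Pow_image_Suc by (subst sum.reindex[OF i1]) (simp add: o_def)
  finally show ?thesis .
qed

lemma (in group) sum_eq_wdist:
  assumes "\<forall>i<k. gs i \<in> carrier G" "x \<in> carrier G"
  shows "(\<Sum>S\<in>Pow {..<k}. if word_prod G gs k S = x
                 then (\<Prod>i<k. if i \<in> S then ps i else 1 - ps i) else 0)
         = wdist G (map (\<lambda>i. (gs i, ps i)) [0..<k]) x"
  using assms
proof (induction k arbitrary: gs ps x)
  case 0
  then show ?case by (auto simp: word_prod_def)
next
  case (Suc k)
  define gs' where "gs' = (\<lambda>i. gs (Suc i))"
  have gs': "\<forall>i<k. gs' i \<in> carrier G" using Suc.prems gs'_def by auto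
  have g0: "gs 0 \<in> carrier G" using Suc.prems by auto
  have ix: "inv (gs 0) \<otimes> x \<in> carrier G" using g0 Suc.prems by auto
  have map_eq: "map (\<lambda>i. (gs i, ps i)) [0..<Suc k] = (gs 0, ps 0) # map (\<lambda>i. (gs' i, ps (Suc i))) [0..<k]"
  proof -
    have "[0..<Suc k] = 0 # map Suc [0..<k]"
      by (simp add: map_Suc_upt upt_conv_Cons)
    then show ?thesis by (simp only: list.map map_map o_def gs'_def)
  qed
  have c1: "{i. Suc i \<in> Suc ` T} = T" for T by auto
  have c2: "{i. Suc i \<in> insert 0 (Suc ` T)} = T" for T by auto
  have p1: "(\<Prod>i<Suc k. if i \<in> Suc ` T then ps i else 1 - ps i) = (1 - ps 0) * (\<Prod>i<k. if i \<in> T then ps (Suc i) else 1 - ps (Suc i))" for T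
    by (subst prod.lessThan_Suc_shift) (simp add: inj_image_mem_iff)
  have p2: "(\<Prod>i<Suc k. if i \<in> insert 0 (Suc ` T) then ps i else 1 - ps i) = ps 0 * (\<Prod>i<k. if i \<in> T then ps (Suc i) else 1 - ps (Suc i))" for T
    by (subst prod.lessThan_Suc_shift) (simp add: inj_image_mem_iff)
  have w1: "word_prod G gs (Suc k) (Suc ` T) = word_prod G gs' k T" for T
    using word_prod_closed[OF gs'] by (simp add: word_prod_Suc c1 gs'_def)
  have w2: "(word_prod G gs (Suc k) (insert 0 (Suc ` T)) = x) = (word_prod G gs' k T = inv (gs 0) \<otimes> x)" for T
  proof -
    have wc: "word_prod G gs' k T \<in> carrier G" using word_prod_closed[OF gs'] by blast
    have "word_prod G gs (Suc k) (insert 0 (Suc ` T)) = gs 0 \<otimes> word_prod G gs' k T"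
      by (simp add: word_prod_Suc c1 c2 gs'_def)
    then show ?thesis using wc g0 Suc.prems(2)
      by (metis inv_solve_left)
  qed
  define P where "P T = (\<Prod>i<k. if i \<in> T then ps (Suc i) else 1 - ps (Suc i))" for T
  define W where "W = map (\<lambda>i. (gs' i, ps (Suc i))) [0..<k]"
  have IH1: "(\<Sum>T\<in>Pow {..<k}. if word_prod G gs' k T = x then P T else 0) = wdist G W x"
    unfolding P_def W_def by (rule Suc.IH[OF gs' Suc.prems(2)])
  have IH2: "(\<Sum>T\<in>Pow {..<k}. if word_prod G gs' k T = inv (gs 0) \<otimes> x then P T else 0) = wdist G W (inv (gs 0) \<otimes> x)"
    unfolding P_def W_def by (rule Suc.IH[OF gs' ix])
  have s1: "(\<Sum>T\<in>Pow {..<k}. if word_prod G gs' k T = x then (1 - ps 0) * P T else 0)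
      = (1 - ps 0) * (\<Sum>T\<in>Pow {..<k}. if word_prod G gs' k T = x then P T else 0)"
    by (subst sum_distrib_left) (rule sum.cong; simp)
  have s2: "(\<Sum>T\<in>Pow {..<k}. if word_prod G gs' k T = inv (gs 0) \<otimes> x then ps 0 * P T else 0)
      = ps 0 * (\<Sum>T\<in>Pow {..<k}. if word_prod G gs' k T = inv (gs 0) \<otimes> x then P T else 0)"
    by (subst sum_distrib_left) (rule sum.cong; simp)
  show ?case
    unfolding sum_Pow_lessThan_Suc map_eq wdist.simps p1 p2 w1 w2 P_def[symmetric] W_def[symmetric]
    using s1 s2 IH1 IH2 by simp
qed


lemma sum_delta_mult:
  assumes "finite A" "a \<in> A"
  shows "(\<Sum>y\<in>A. (if y = a then 1 else 0) * h y) = (h a :: 'c::semiring_1)"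
proof -
  have "(\<Sum>y\<in>A. (if y = a then 1 else 0) * h y) = (\<Sum>y\<in>A. if y = a then h y else 0)"
    by (rule sum.cong) auto
  also have "\<dots> = h a" using assms by (simp add: sum.delta')
  finally show ?thesis .
qed

lemma (in group) sum_lmult_reindex:
  assumes "g \<in> carrier G"
  shows "(\<Sum>z\<in>carrier G. h (g \<otimes> z)) = (\<Sum>y\<in>carrier G. (h y :: 'c::comm_monoid_add))"
  by (rule sum.reindex_bij_witness[of _ "\<lambda>y. inv g \<otimes> y" "\<lambda>z. g \<otimes> z"])
     (use assms in \<open>auto simp: m_assoc[symmetric]\<close>)

lemma (in group) wdist_sum1:
  assumes "finite (carrier G)" "\<forall>gp\<in>set w. fst gp \<in> carrier G"
  shows "(\<Sum>x\<in>carrier G. wdist G w x) = 1"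
  using assms(2)
proof (induction w)
  case Nil
  then show ?case using assms(1) by (simp add: sum.delta')
next
  case (Cons gp w)
  obtain g p where gp: "gp = (g,p)" by force
  have g: "g \<in> carrier G" using Cons.prems gp by auto
  have "(\<Sum>x\<in>carrier G. wdist G w (inv g \<otimes> x)) = (\<Sum>x\<in>carrier G. wdist G w x)"
    using sum_lmult_reindex[of "inv g" "wdist G w"] g by simp
  then show ?case using Cons gp by (simp add: sum.distrib sum_distrib_left[symmetric])
qed

lemma (in group) wdist_append:
  assumes "finite (carrier G)" "\<forall>gp\<in>set w1. fst gp \<in> carrier G" "\<forall>gp\<in>set w2. fst gp \<in> carrier G" "x \<in> carrier G"
  shows "wdist G (w1 @ w2) x = (\<Sum>y\<in>carrier G. wdist G w1 y * wdist G w2 (inv y \<otimes> x))"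
  using assms(2,4)
proof (induction w1 arbitrary: x)
  case Nil
  then show ?case using sum_delta_mult[OF assms(1) one_closed, of "\<lambda>y. wdist G w2 (inv y \<otimes> x)"] by simp
next
  case (Cons gp w1)
  obtain g p where gp: "gp = (g,p)" by force
  have g: "g \<in> carrier G" using Cons.prems gp by auto
  have ix: "inv g \<otimes> x \<in> carrier G" using g Cons.prems by auto
  have "(\<Sum>y\<in>carrier G. wdist G w1 (inv g \<otimes> y) * wdist G w2 (inv y \<otimes> x))
      = (\<Sum>z\<in>carrier G. wdist G w1 (inv g \<otimes> (g \<otimes> z)) * wdist G w2 (inv (g \<otimes> z) \<otimes> x))"
    using sum_lmult_reindex[OF g, of "\<lambda>y. wdist G w1 (inv g \<otimes> y) * wdist G w2 (inv y \<otimes> x)"] by simp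
  also have "\<dots> = (\<Sum>z\<in>carrier G. wdist G w1 z * wdist G w2 (inv z \<otimes> (inv g \<otimes> x)))"
    using g Cons.prems by (intro sum.cong refl) (simp add: m_assoc[symmetric] inv_mult_group)
  finally have e: "(\<Sum>y\<in>carrier G. wdist G w1 (inv g \<otimes> y) * wdist G w2 (inv y \<otimes> x))
      = (\<Sum>z\<in>carrier G. wdist G w1 z * wdist G w2 (inv z \<otimes> (inv g \<otimes> x)))" .
  have "wdist G ((gp # w1) @ w2) x = (1-p) * wdist G (w1 @ w2) x + p * wdist G (w1 @ w2) (inv g \<otimes> x)"
    by (simp add: gp)
  also have "\<dots> = (1-p) * (\<Sum>y\<in>carrier G. wdist G w1 y * wdist G w2 (inv y \<otimes> x))
       + p * (\<Sum>z\<in>carrier G. wdist G w1 z * wdist G w2 (inv z \<otimes> (inv g \<otimes> x)))"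
    using Cons.IH Cons.prems ix by simp
  also have "\<dots> = (\<Sum>y\<in>carrier G. ((1-p) * wdist G w1 y + p * wdist G w1 (inv g \<otimes> y)) * wdist G w2 (inv y \<otimes> x))"
    unfolding e[symmetric]
    by (simp only: sum_distrib_left sum.distrib[symmetric] distrib_right mult.assoc)
  also have "\<dots> = (\<Sum>y\<in>carrier G. wdist G (gp # w1) y * wdist G w2 (inv y \<otimes> x))"
    by (simp add: gp)
  finally show ?case .
qed

lemma (in group) wdist_support:
  assumes "subgroup H G" "\<forall>gp\<in>set w. fst gp \<in> H" "wdist G w x \<noteq> 0" "x \<in> carrier G"
  shows "x \<in> H"
  using assms(2,3,4)
proof (induction w arbitrary: x)
  case Nil
  then have "x = \<one>" by (simp split: if_splits)
  then show ?case using subgroup.one_closed[OF assms(1)] by simp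
next
  case (Cons gp w)
  obtain g p where gp: "gp = (g,p)" by force
  have gH: "g \<in> H" using Cons.prems(1) gp by auto
  have wH: "\<forall>gp\<in>set w. fst gp \<in> H" using Cons.prems(1) by simp
  have gc: "g \<in> carrier G" using gH assms(1) subgroup.subset by blast
  have xc: "x \<in> carrier G" using Cons.prems(3) .
  have ixc: "inv g \<otimes> x \<in> carrier G" using gc xc by simp
  from Cons.prems(2) gp have "wdist G w x \<noteq> 0 \<or> wdist G w (inv g \<otimes> x) \<noteq> 0" by auto
  then show ?case
  proof
    assume "wdist G w x \<noteq> 0" then show ?thesis by (rule Cons.IH[OF wH _ xc])
  next
    assume "wdist G w (inv g \<otimes> x) \<noteq> 0"
    then have h: "inv g \<otimes> x \<in> H" by (rule Cons.IH[OF wH _ ixc])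
    then have "g \<otimes> (inv g \<otimes> x) \<in> H" using gH subgroup.m_closed[OF assms(1)] by blast
    then show ?thesis using gc xc by (simp add: m_assoc[symmetric])
  qed
qed

lemma (in group) wdist_expect:
  fixes f :: "'a \<Rightarrow> complex"
  assumes "finite (carrier G)" "\<forall>gp\<in>set w. fst gp \<in> carrier G" "f \<one> = 1"
    "\<And>a b. a \<in> carrier G \<Longrightarrow> b \<in> carrier G \<Longrightarrow> f (a \<otimes> b) = f a * f b"
  shows "(\<Sum>x\<in>carrier G. of_real (wdist G w x) * f x) = prod_list (map (\<lambda>(g,p). 1 - of_real p + of_real p * f g) w)"
  using assms(2)
proof (induction w)
  case Nil
  have "(\<Sum>x\<in>carrier G. of_real (wdist G [] x) * f x) = (\<Sum>x\<in>carrier G. (if x = \<one> then 1 else 0) * f x)"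
    by (rule sum.cong) auto
  then show ?case using assms(3) sum_delta_mult[OF assms(1) one_closed, of f] by simp
next
  case (Cons gp w)
  obtain g p where gp: "gp = (g,p)" by force
  have g: "g \<in> carrier G" using Cons.prems gp by auto
  have "(\<Sum>x\<in>carrier G. of_real (wdist G w (inv g \<otimes> x)) * f x)
      = (\<Sum>z\<in>carrier G. of_real (wdist G w (inv g \<otimes> (g \<otimes> z))) * f (g \<otimes> z))"
    using sum_lmult_reindex[OF g, of "\<lambda>x. of_real (wdist G w (inv g \<otimes> x)) * f x"] by simp
  also have "\<dots> = f g * (\<Sum>z\<in>carrier G. of_real (wdist G w z) * f z)"
    using g by (simp add: sum_distrib_left m_assoc[symmetric] assms(4) mult_ac)
  finally have e: "(\<Sum>x\<in>carrier G. of_real (wdist G w (inv g \<otimes> x)) * f x) = f g * (\<Sum>z\<in>carrier G. of_real (wdist G w z) * f z)" .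
  have "(\<Sum>x\<in>carrier G. of_real (wdist G (gp # w) x) * f x)
     = (\<Sum>x\<in>carrier G. (1 - of_real p) * (of_real (wdist G w x) * f x)
       + of_real p * (of_real (wdist G w (inv g \<otimes> x)) * f x))"
    by (rule sum.cong) (simp_all add: gp algebra_simps)
  also have "\<dots> = (1 - of_real p) * (\<Sum>x\<in>carrier G. of_real (wdist G w x) * f x)
       + of_real p * (\<Sum>x\<in>carrier G. of_real (wdist G w (inv g \<otimes> x)) * f x)"
    by (simp only: sum.distrib sum_distrib_left)
  also have "\<dots> = (1 - of_real p + of_real p * f g) * (\<Sum>x\<in>carrier G. of_real (wdist G w x) * f x)"
    unfolding e by (simp add: algebra_simps)
  finally show ?case using Cons gp by simp
qed


lemma GL_simps [simp]:
  "carrier (GL_group :: ('a::field^'n^'n) monoid) = {A. invertible A}"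
  "mult (GL_group :: ('a::field^'n^'n) monoid) = (**)"
  "one (GL_group :: ('a::field^'n^'n) monoid) = mat 1"
  by (simp_all add: GL_group_def)

lemma matrix_inv_props:
  fixes A :: "'a::field^'n^'n"
  assumes "invertible A"
  shows "A ** matrix_inv A = mat 1" "matrix_inv A ** A = mat 1"
proof -
  have "\<exists>A'. A ** A' = mat 1 \<and> A' ** A = mat 1" using assms unfolding invertible_def .
  then have "A ** matrix_inv A = mat 1 \<and> matrix_inv A ** A = mat 1"
    unfolding matrix_inv_def by (rule someI_ex)
  then show "A ** matrix_inv A = mat 1" "matrix_inv A ** A = mat 1" by auto
qed

lemma invertible_matrix_inv:
  fixes A :: "'a::field^'n^'n"
  assumes "invertible A" shows "invertible (matrix_inv A)"
  using matrix_inv_props[OF assms] unfolding invertible_def by blast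

lemma invertible_one: "invertible (mat 1 :: 'a::field^'n^'n)"
  unfolding invertible_def by (rule exI[of _ "mat 1"]) simp

lemma GL_is_group: "group (GL_group :: ('a::field^'n^'n) monoid)"
proof (rule groupI)
  fix x assume "x \<in> carrier (GL_group :: ('a::field^'n^'n) monoid)"
  then have "invertible x" by simp
  then show "\<exists>y \<in> carrier (GL_group :: ('a::field^'n^'n) monoid). y \<otimes>\<^bsub>GL_group\<^esub> x = \<one>\<^bsub>GL_group\<^esub>"
    using matrix_inv_props invertible_matrix_inv by fastforce
qed (auto simp: invertible_mult invertible_one matrix_mul_assoc)

lemma GL_inv:
  fixes A :: "'a::field^'n^'n"
  assumes "invertible A"
  shows "inv\<^bsub>GL_group\<^esub> A = matrix_inv A"
  using group.inv_equality[OF GL_is_group, of "matrix_inv A" A] assms matrix_inv_props[OF assms]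
    invertible_matrix_inv[OF assms] by simp

lemma matrix_inv_cancel:
  fixes A :: "'a::field^'n^'n"
  assumes "invertible A"
  shows "matrix_inv A *v (A *v v) = v" "A *v (matrix_inv A *v v) = v"
  using matrix_inv_props[OF assms] by (simp_all add: matrix_vector_mul_assoc)

lemma inv_from_action:
  fixes A B :: "'a::field^'n^'n"
  assumes "\<And>v. A *v (B *v v) = v" "\<And>v. B *v (A *v v) = v"
  shows "invertible A" "matrix_inv A = B"
proof -
  have AB: "A ** B = mat 1" unfolding matrix_eq using assms(1) by (simp add: matrix_vector_mul_assoc[symmetric])
  have BA: "B ** A = mat 1" unfolding matrix_eq using assms(2) by (simp add: matrix_vector_mul_assoc[symmetric])
  show inv: "invertible A" unfolding invertible_def using AB BA by blast
  have "matrix_inv A = matrix_inv A ** (A ** B)" using AB by simp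
  also have "\<dots> = B" using matrix_inv_props(2)[OF inv] by (simp add: matrix_mul_assoc)
  finally show "matrix_inv A = B" .
qed

lemma finite_GL: "finite (carrier (GL_group :: ('a::{field,finite}^'n^'n) monoid))"
  by simp

lemma GL_reindex:
  fixes g :: "'a::field^'n^'n"
  assumes "invertible g"
  shows "(\<Sum>z\<in>{A::'a^'n^'n. invertible A}. h (g ** z)) = (\<Sum>y\<in>{A::'a^'n^'n. invertible A}. (h y :: 'c::comm_monoid_add))"
proof (rule sum.reindex_bij_witness[of _ "\<lambda>y. matrix_inv g ** y" "\<lambda>z. g ** z"])
  fix a :: "'a^'n^'n" assume "a \<in> {A. invertible A}"
  then show "matrix_inv g ** (g ** a) = a" "g ** a \<in> {A. invertible A}" "h (g ** a) = h (g ** a)"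
    using matrix_inv_props[OF assms] assms by (auto simp: matrix_mul_assoc invertible_mult)
next
  fix b :: "'a^'n^'n" assume "b \<in> {A. invertible A}"
  then show "g ** (matrix_inv g ** b) = b" "matrix_inv g ** b \<in> {A. invertible A}"
    using matrix_inv_props[OF assms] invertible_matrix_inv[OF assms] by (auto simp: matrix_mul_assoc invertible_mult)
qed

section \<open>Distributions on vectors\<close>

fun run :: "(('a::field^'n^'n) \<times> real) list \<Rightarrow> ('a^'n \<Rightarrow> real) \<Rightarrow> 'a^'n \<Rightarrow> real" where
  "run [] \<mu> v = \<mu> v"
| "run ((g,p)#w) \<mu> v = (1-p) * run w \<mu> v + p * run w \<mu> (matrix_inv g *v v)"

lemma run_append: "run (w1 @ w2) \<mu> = run w1 (run w2 \<mu>)"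
proof (induction w1)
  case Nil then show ?case by (simp add: fun_eq_iff)
next
  case (Cons gp w1)
  then show ?case by (cases gp) (simp add: fun_eq_iff)
qed

lemma run_linear: "run w (\<lambda>v. a * \<mu> v + b * \<nu> v) v = a * run w \<mu> v + b * run w \<nu> v"
proof (induction w arbitrary: v)
  case Nil then show ?case by simp
next
  case (Cons gp w)
  then show ?case by (cases gp) (simp add: algebra_simps)
qed

lemma run_invariant:
  assumes "\<forall>gp\<in>set w. \<forall>v. \<mu> (matrix_inv (fst gp) *v v) = \<mu> v"
  shows "run w \<mu> v = \<mu> v"
  using assms
proof (induction w arbitrary: v)
  case Nil then show ?case by simp
next
  case (Cons gp w)
  then show ?case by (cases gp) (simp add: algebra_simps)
qed

lemma run_fixed:
  fixes u :: "'a::field^'n"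
  assumes "\<forall>gp\<in>set w. invertible (fst gp) \<and> fst gp *v u = u"
  shows "run w (\<lambda>z. if z = u then 1 else 0) v = (if v = u then 1 else 0)"
proof (rule run_invariant)
  show "\<forall>gp\<in>set w. \<forall>v. (if matrix_inv (fst gp) *v v = u then 1 else 0) = (if v = u then 1 else (0::real))"
  proof (intro ballI allI)
    fix gp v assume "gp \<in> set w"
    then have i: "invertible (fst gp)" and f: "fst gp *v u = u" using assms by auto
    have "(matrix_inv (fst gp) *v v = u) = (v = u)"
      using matrix_inv_cancel[OF i] f by metis
    then show "(if matrix_inv (fst gp) *v v = u then 1 else 0) = (if v = u then 1 else (0::real))" by simp
  qed
qed

lemma vd_run:
  fixes w :: "(('a::{field,finite}^'n^'n) \<times> real) list"
  assumes "\<forall>gp\<in>set w. invertible (fst gp)"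
  shows "(\<Sum>y\<in>{A. invertible A}. if y *v u = v then wdist GL_group w y else 0)
           = run w (\<lambda>z. if z = u then 1 else 0) v"
  using assms
proof (induction w arbitrary: v)
  case Nil
  have "(\<Sum>y\<in>{A::'a^'n^'n. invertible A}. if y *v u = v then wdist GL_group [] y else 0)
      = (\<Sum>y\<in>{A::'a^'n^'n. invertible A}. if y = mat 1 then (if u = v then 1 else 0) else 0)"
    by (rule sum.cong) auto
  also have "\<dots> = (if u = v then 1 else 0)"
  proof -
    have "invertible (mat 1 :: 'a^'n^'n)" by (rule invertible_one)
    then show ?thesis by (simp add: sum.delta')
  qed
  finally show ?case by auto
next
  case (Cons gp w)
  obtain g p where gp: "gp = (g,p)" by force
  have g: "invertible g" using Cons.prems gp by auto
  have gi: "invertible (matrix_inv g)" using invertible_matrix_inv[OF g] .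
  have wi: "\<forall>gp\<in>set w. invertible (fst gp)" using Cons.prems by simp
  have "(\<Sum>y\<in>{A. invertible A}. if y *v u = v then wdist GL_group w (matrix_inv g ** y) else 0)
      = (\<Sum>z\<in>{A. invertible A}. if (g ** z) *v u = v then wdist GL_group w (matrix_inv g ** (g ** z)) else 0)"
    using GL_reindex[OF g, of "\<lambda>y. if y *v u = v then wdist GL_group w (matrix_inv g ** y) else 0"]
    by simp
  also have "\<dots> = (\<Sum>z\<in>{A. invertible A}. if z *v u = matrix_inv g *v v then wdist GL_group w z else 0)"
  proof (rule sum.cong[OF refl])
    fix z
    have "((g ** z) *v u = v) = (z *v u = matrix_inv g *v v)"
      using matrix_inv_cancel[OF g] by (metis matrix_vector_mul_assoc)
    moreover have "matrix_inv g ** (g ** z) = z" using matrix_inv_props(2)[OF g] by (simp add: matrix_mul_assoc)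
    ultimately show "(if (g ** z) *v u = v then wdist GL_group w (matrix_inv g ** (g ** z)) else 0)
        = (if z *v u = matrix_inv g *v v then wdist GL_group w z else 0)" by simp
  qed
  finally have e: "(\<Sum>y\<in>{A. invertible A}. if y *v u = v then wdist GL_group w (matrix_inv g ** y) else 0)
      = run w (\<lambda>z. if z = u then 1 else 0) (matrix_inv g *v v)" using Cons.IH[OF wi] by simp
  have "(\<Sum>y\<in>{A. invertible A}. if y *v u = v then wdist GL_group (gp # w) y else 0)
      = (\<Sum>y\<in>{A. invertible A}. (1-p) * (if y *v u = v then wdist GL_group w y else 0)
            + p * (if y *v u = v then wdist GL_group w (matrix_inv g ** y) else 0))"
    by (rule sum.cong) (auto simp: gp GL_inv g)
  also have "\<dots> = (1-p) * (\<Sum>y\<in>{A. invertible A}. if y *v u = v then wdist GL_group w y else 0)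
            + p * (\<Sum>y\<in>{A. invertible A}. if y *v u = v then wdist GL_group w (matrix_inv g ** y) else 0)"
    by (simp only: sum.distrib sum_distrib_left)
  also have "\<dots> = run (gp # w) (\<lambda>z. if z = u then 1 else 0) v"
    unfolding e Cons.IH[OF wi] by (simp add: gp)
  finally show ?case .
qed


definition ev :: "'n \<Rightarrow> 'a::field^'n" where "ev s = (\<chi> r. if r = s then 1 else 0)"
definition dl :: "'v \<Rightarrow> 'v \<Rightarrow> real" where "dl u = (\<lambda>z. if z = u then 1 else 0)"

definition scl :: "'n \<Rightarrow> 'a::field \<Rightarrow> 'a^'n \<Rightarrow> 'a^'n" where
  "scl s c v = (\<chi> r. if r = s then c * v$r else v$r)"
definition Dm :: "'n \<Rightarrow> 'a::field \<Rightarrow> 'a^'n^'n" where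
  "Dm s c = (\<chi> r t. if r = t then (if r = s then c else 1) else 0)"

definition addm :: "'n \<Rightarrow> 'n \<Rightarrow> 'a::field^'n \<Rightarrow> 'a^'n" where
  "addm i j v = (\<chi> r. if r = i then v$i + v$j else v$r)"
definition subm :: "'n \<Rightarrow> 'n \<Rightarrow> 'a::field^'n \<Rightarrow> 'a^'n" where
  "subm i j v = (\<chi> r. if r = i then v$i - v$j else v$r)"
definition Tm :: "'n \<Rightarrow> 'n \<Rightarrow> 'a::field^'n^'n" where
  "Tm i j = (\<chi> r t. (if r = t then 1 else 0) + (if r = i \<and> t = j then 1 else 0))"
definition Tmi :: "'n \<Rightarrow> 'n \<Rightarrow> 'a::field^'n^'n" where
  "Tmi i j = (\<chi> r t. (if r = t then 1 else 0) - (if r = i \<and> t = j then 1 else 0))"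

definition swp :: "'n \<Rightarrow> 'n \<Rightarrow> 'n \<Rightarrow> 'n" where
  "swp i j r = (if r = i then j else if r = j then i else r)"
definition Pm :: "'n \<Rightarrow> 'n \<Rightarrow> 'a::field^'n^'n" where
  "Pm i j = (\<chi> r t. if t = swp i j r then 1 else 0)"

lemma Dm_mult: "Dm s c *v v = scl s c v"
  unfolding Dm_def scl_def matrix_vector_mult_def
  by (simp add: vec_eq_iff if_distrib[of "\<lambda>x. x * _"] sum.delta cong: if_cong)

lemma Tm_mult: "Tm i j *v v = addm i j v"
proof -
  have "(\<Sum>t\<in>UNIV. ((if r = t then 1 else 0) + (if r = i \<and> t = j then 1 else 0)) * v $ t)
      = v $ r + (if r = i then v $ j else 0)" for r
    by (simp add: distrib_right sum.distrib if_distrib[of "\<lambda>x. x * _"] sum.delta cong: if_cong)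
  then show ?thesis unfolding Tm_def addm_def matrix_vector_mult_def by (simp add: vec_eq_iff)
qed

lemma Tmi_mult: "Tmi i j *v v = subm i j v"
proof -
  have "(\<Sum>t\<in>UNIV. ((if r = t then 1 else 0) - (if r = i \<and> t = j then 1 else 0)) * v $ t)
      = v $ r - (if r = i then v $ j else 0)" for r
    by (simp add: left_diff_distrib sum_subtractf if_distrib[of "\<lambda>x. x * _"] sum.delta cong: if_cong)
  then show ?thesis unfolding Tmi_def subm_def matrix_vector_mult_def by (simp add: vec_eq_iff)
qed

lemma Pm_mult: "Pm i j *v v = (\<chi> r. v $ swp i j r)"
  unfolding Pm_def matrix_vector_mult_def
  by (simp add: vec_eq_iff if_distrib[of "\<lambda>x. x * _"] sum.delta cong: if_cong)

lemma swp_swp [simp]: "swp i j (swp i j r) = r"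
  by (simp add: swp_def)

lemma scl_scl: "scl s a (scl s b v) = scl s (a * b) v"
  by (simp add: scl_def vec_eq_iff)

lemma scl_1 [simp]: "scl s 1 v = v"
  by (simp add: scl_def vec_eq_iff)

lemma Dm_inv:
  assumes "(c::'a::field) \<noteq> 0"
  shows "invertible (Dm s c)" "matrix_inv (Dm s c) = Dm s (inverse c)"
proof -
  have 1: "Dm s c *v (Dm s (inverse c) *v v) = v" for v
    using assms by (simp add: Dm_mult scl_scl)
  have 2: "Dm s (inverse c) *v (Dm s c *v v) = v" for v
    using assms by (simp add: Dm_mult scl_scl)
  show "invertible (Dm s c)" "matrix_inv (Dm s c) = Dm s (inverse c)"
    using inv_from_action[OF 1 2] by auto
qed

lemma Tm_inv:
  assumes "i \<noteq> j"
  shows "invertible (Tm i j :: 'a::field^'n^'n)" "matrix_inv (Tm i j :: 'a::field^'n^'n) = Tmi i j"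
proof -
  have 1: "Tm i j *v (Tmi i j *v v) = v" for v :: "'a^'n"
    using assms by (simp add: Tm_mult Tmi_mult addm_def subm_def vec_eq_iff)
  have 2: "Tmi i j *v (Tm i j *v v) = v" for v :: "'a^'n"
    using assms by (simp add: Tm_mult Tmi_mult addm_def subm_def vec_eq_iff)
  show "invertible (Tm i j :: 'a::field^'n^'n)" "matrix_inv (Tm i j :: 'a::field^'n^'n) = Tmi i j"
    using inv_from_action[OF 1 2] by auto
qed

lemma Pm_inv:
  shows "invertible (Pm i j :: 'a::field^'n^'n)" "matrix_inv (Pm i j :: 'a::field^'n^'n) = Pm i j"
proof -
  have 1: "Pm i j *v (Pm i j *v v) = v" for v :: "'a^'n"
    by (simp add: Pm_mult vec_eq_iff)
  show "invertible (Pm i j :: 'a::field^'n^'n)" "matrix_inv (Pm i j :: 'a::field^'n^'n) = Pm i j"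
    using inv_from_action[OF 1 1] by auto
qed

lemma sum_double_split:
  fixes f :: "nat \<Rightarrow> 'c::comm_monoid_add"
  shows "(\<Sum>e<N+N. f e) = (\<Sum>e<N. f e) + (\<Sum>e<N. f (e + N))"
proof -
  have u: "{..<N+N} = {..<N} \<union> {N..<N+N}" by auto
  have "(\<Sum>e<N+N. f e) = (\<Sum>e<N. f e) + (\<Sum>e\<in>{N..<N+N}. f e)"
    unfolding u by (rule sum.union_disjoint) auto
  also have "(\<Sum>e\<in>{N..<N+N}. f e) = (\<Sum>e\<in>{0+N..<N+N}. f e)" by simp
  also have "\<dots> = (\<Sum>e<N. f (e + N))" unfolding sum.shift_bounds_nat_ivl by (simp add: atLeast0LessThan)
  finally show ?thesis .
qed

definition Scw :: "'a::field \<Rightarrow> nat \<Rightarrow> 'n \<Rightarrow> (('a^'n^'n) \<times> real) list" where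
  "Scw \<gamma> m j = map (\<lambda>t. (Dm j (inverse (\<gamma> ^ (2^t))), 1/2)) [0..<m]"

lemma run_Scw_aux:
  fixes \<gamma> :: "'a::field"
  assumes "\<gamma> \<noteq> 0"
  shows "run (Scw \<gamma> t j) \<mu> v = (1 / 2^t) * (\<Sum>e<2^t. \<mu> (scl j (\<gamma>^e) v))"
proof (induction t arbitrary: \<mu>)
  case 0
  then show ?case by (simp add: Scw_def)
next
  case (Suc t)
  have split: "Scw \<gamma> (Suc t) j = Scw \<gamma> t j @ [(Dm j (inverse (\<gamma> ^ (2^t))), 1/2)]"
    by (simp add: Scw_def)
  have ne: "inverse (\<gamma> ^ (2^t)) \<noteq> 0" using assms by simp
  have r1: "run [(Dm j (inverse (\<gamma> ^ (2^t))), 1/2)] \<mu> z = 1/2 * \<mu> z + 1/2 * \<mu> (scl j (\<gamma> ^ (2^t)) z)" for z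
    using Dm_inv(2)[OF ne, of j] by (simp add: Dm_mult)
  have "run (Scw \<gamma> (Suc t) j) \<mu> v = (1 / 2^t) * (\<Sum>e<2^t. run [(Dm j (inverse (\<gamma> ^ (2^t))), 1/2)] \<mu> (scl j (\<gamma>^e) v))"
    unfolding split run_append by (rule Suc.IH)
  also have "\<dots> = (1 / 2^t) * (\<Sum>e<2^t. 1/2 * \<mu> (scl j (\<gamma>^e) v) + 1/2 * \<mu> (scl j (\<gamma>^(e + 2^t)) v))"
    unfolding r1 by (simp add: scl_scl power_add mult.commute)
  also have "\<dots> = (1 / 2^(Suc t)) * ((\<Sum>e<2^t. \<mu> (scl j (\<gamma>^e) v)) + (\<Sum>e<2^t. \<mu> (scl j (\<gamma>^(e + 2^t)) v)))"
    by (simp add: sum.distrib sum_divide_distrib[symmetric] algebra_simps)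
  also have "\<dots> = (1 / 2^(Suc t)) * (\<Sum>e<2^(Suc t). \<mu> (scl j (\<gamma>^e) v))"
  proof -
    have e: "(2::nat)^(Suc t) = 2^t + 2^t" by simp
    show ?thesis by (simp only: e sum_double_split[of "\<lambda>e. \<mu> (scl j (\<gamma>^e) v)" "2^t"])
  qed
  finally show ?case .
qed

lemma run_Scw:
  fixes \<gamma> :: "'a::field"
  assumes "\<gamma> \<noteq> 0" "bij_betw (\<lambda>e. \<gamma>^e) {..<2^m} (UNIV - {0})"
  shows "run (Scw \<gamma> m j) \<mu> v = (1 / 2^m) * (\<Sum>a\<in>UNIV - {0}. \<mu> (scl j a v))"
proof -
  have "(\<Sum>e<2^m. \<mu> (scl j (\<gamma>^e) v)) = (\<Sum>a\<in>UNIV - {0}. \<mu> (scl j a v))"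
    using sum.reindex_bij_betw[OF assms(2), of "\<lambda>a. \<mu> (scl j a v)"] by simp
  moreover have "run (Scw \<gamma> m j) \<mu> v = (1/2^m) * (\<Sum>e<2^m. \<mu> (scl j (\<gamma>^e) v))"
    by (rule run_Scw_aux[OF assms(1)])
  ultimately show ?thesis by simp
qed


section \<open>Spreading a basis vector\<close>

definition Gen :: "'n \<Rightarrow> ('a::field^'n^'n) set" where
  "Gen j = {g. invertible g \<and> (\<forall>v. v$j = 0 \<longrightarrow> g *v v = v)}"

definition Nw :: "'n \<Rightarrow> 'n set \<Rightarrow> ('a::field^'n) set" where
  "Nw j M = {v. v$j \<noteq> 0 \<and> (\<forall>s. s \<notin> M \<and> s \<noteq> j \<longrightarrow> v$s = 0)}"

lemma Dm_Gen: "(c::'a::field) \<noteq> 0 \<Longrightarrow> Dm j c \<in> Gen j"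
  unfolding Gen_def using Dm_inv(1) by (auto simp: Dm_mult scl_def vec_eq_iff)

lemma Tm_Gen: "i \<noteq> j \<Longrightarrow> (Tm i j :: 'a::field^'n^'n) \<in> Gen j"
  unfolding Gen_def using Tm_inv(1) by (auto simp: Tm_mult addm_def vec_eq_iff)

lemma Scw_Gen:
  assumes "(\<gamma>::'a::field) \<noteq> 0"
  shows "\<forall>gp\<in>set (Scw \<gamma> m j). fst gp \<in> Gen j \<and> 0 \<le> snd gp \<and> snd gp \<le> 1"
  using assms by (auto simp: Scw_def intro!: Dm_Gen)

lemma scl_eq_ev:
  assumes "(a::'a::field) \<noteq> 0"
  shows "(scl j a v = ev j) = (v \<in> Nw j {} \<and> a = inverse (v$j))"
proof
  assume h: "scl j a v = ev j"
  have hj: "a * v$j = 1" using arg_cong[OF h, of "\<lambda>x. x$j"] by (simp add: scl_def ev_def)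
  have hs: "v$s = 0" if "s \<noteq> j" for s using arg_cong[OF h, of "\<lambda>x. x$s"] that by (simp add: scl_def ev_def)
  from hj have "v$j \<noteq> 0" by auto
  moreover from hj have "a = inverse (v$j)" by (metis inverse_unique mult.commute)
  ultimately show "v \<in> Nw j {} \<and> a = inverse (v$j)" using hs by (auto simp: Nw_def)
next
  assume "v \<in> Nw j {} \<and> a = inverse (v$j)"
  then show "scl j a v = ev j" by (auto simp: Nw_def scl_def ev_def vec_eq_iff)
qed

lemma New_base:
  fixes \<gamma> :: "'a::{field,finite}" and j :: "'n::finite"
  assumes "\<gamma> \<noteq> 0" "bij_betw (\<lambda>e. \<gamma>^e) {..<2^m} (UNIV - {0})"
  shows "run (Scw \<gamma> m j) (dl (ev j)) v = (if v \<in> Nw j {} then 1 / 2^m else 0)"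
proof -
  have "(\<Sum>a\<in>UNIV - {0}. dl (ev j) (scl j a v)) = (\<Sum>a\<in>UNIV - {0::'a}. if v \<in> Nw j {} \<and> a = inverse (v$j) then 1 else 0)"
    by (rule sum.cong) (auto simp: dl_def scl_eq_ev)
  also have "\<dots> = (if v \<in> Nw j {} then 1 else 0)"
  proof (cases "v \<in> Nw j {}")
    case True
    then have "inverse (v$j) \<in> UNIV - {0}" by (auto simp: Nw_def)
    then show ?thesis using True by (simp add: sum.delta')
  next
    case False
    then show ?thesis by simp
  qed
  finally show ?thesis using run_Scw[OF assms, of j "dl (ev j)" v] by simp
qed

lemma New_facts:
  fixes v :: "'a::field^'n"
  assumes "a \<noteq> 0" "i \<noteq> j" "i \<notin> M"
  shows "(scl j a v \<in> Nw j M) = (v \<in> Nw j (insert i M) \<and> v$i = 0)"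
    and "(subm i j (scl j a v) \<in> Nw j M) = (v \<in> Nw j (insert i M) \<and> v$i = a * v$j)"
  using assms by (auto simp: Nw_def scl_def subm_def)

lemma New:
  fixes \<gamma> :: "'a::{field,finite}" and j :: "'n::finite"
  assumes "\<gamma> \<noteq> 0" "bij_betw (\<lambda>e. \<gamma>^e) {..<2^m} (UNIV - {0})" "j \<notin> M"
  shows "\<exists>w::(('a^'n^'n) \<times> real) list. (\<forall>gp\<in>set w. fst gp \<in> Gen j \<and> 0 \<le> snd gp \<and> snd gp \<le> 1) \<and>
             (\<exists>C>0. \<forall>v. run w (dl (ev j)) v = (if v \<in> Nw j M then C else 0))"
proof -
  have fin: "finite M" by simp
  have cardN: "card (UNIV - {0::'a}) = 2^m" using bij_betw_same_card[OF assms(2)] by simp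
  define N :: real where "N = 2^m"
  have Npos: "N > 0" by (simp add: N_def)
  show ?thesis using fin assms(3)
  proof (induction M rule: finite_induct)
    case empty
    have "\<forall>gp\<in>set (Scw \<gamma> m j). fst gp \<in> Gen j \<and> 0 \<le> snd gp \<and> snd gp \<le> 1"
      by (rule Scw_Gen[OF assms(1)])
    moreover have "\<forall>v. run (Scw \<gamma> m j) (dl (ev j)) v = (if v \<in> Nw j {} then 1/2^m else 0)"
      by (intro allI) (rule New_base[OF assms(1,2)])
    moreover have "(1/2^m::real) > 0" by simp
    ultimately have "(\<forall>gp\<in>set (Scw \<gamma> m j). fst gp \<in> Gen j \<and> 0 \<le> snd gp \<and> snd gp \<le> 1) \<and>
       (\<exists>C>0. \<forall>v. run (Scw \<gamma> m j) (dl (ev j)) v = (if v \<in> Nw j {} then C else 0))"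
      by blast
    then show ?case by (rule exI)
  next
    case (insert i M)
    have ij: "i \<noteq> j" and jM: "j \<notin> M" using insert.prems by auto
    obtain w :: "(('a^'n^'n) \<times> real) list" and C :: real where w: "\<forall>gp\<in>set w. fst gp \<in> Gen j \<and> 0 \<le> snd gp \<and> snd gp \<le> 1"
      and C: "C > 0" and rw: "\<And>v. run w (dl (ev j)) v = (if v \<in> Nw j M then C else 0)"
      using insert.IH[OF jM] by blast
    define p where "p = N / (N + 1)"
    have p01: "0 \<le> p" "p \<le> 1" using Npos by (auto simp: p_def)
    define w' where "w' = Scw \<gamma> m j @ [(Tm i j, p)] @ w"
    have w'props: "\<forall>gp\<in>set w'. fst gp \<in> Gen j \<and> 0 \<le> snd gp \<and> snd gp \<le> 1"
      using w Scw_Gen[OF assms(1), of m j] Tm_Gen[OF ij] p01 by (auto simp: w'_def)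
    define \<mu>1 where "\<mu>1 = run [(Tm i j, p)] (run w (dl (ev j)))"
    have mu1: "\<mu>1 z = (1-p) * (if z \<in> Nw j M then C else 0) + p * (if subm i j z \<in> Nw j M then C else 0)" for z
    proof -
      have ti: "matrix_inv (Tm i j :: 'a^'n^'n) = Tmi i j" by (rule Tm_inv(2)[OF ij])
      show ?thesis unfolding \<mu>1_def by (simp add: ti rw Tmi_mult)
    qed
    have main: "(\<Sum>a\<in>UNIV - {0}. \<mu>1 (scl j a v)) = (if v \<in> Nw j (insert i M) then p * C else 0)" for v
    proof (cases "v \<in> Nw j (insert i M)")
      case False
      have "\<mu>1 (scl j a v) = 0" if "a \<in> UNIV - {0}" for a
        using that False New_facts[OF _ ij insert.hyps(2), of a v] by (simp add: mu1)
      then show ?thesis using False by simp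
    next
      case True
      then have vj: "v$j \<noteq> 0" by (simp add: Nw_def)
      have "(\<Sum>a\<in>UNIV - {0}. \<mu>1 (scl j a v))
          = (\<Sum>a\<in>UNIV - {0::'a}. (1-p) * (if v$i = 0 then C else 0) + p * (if a = v$i / v$j then C else 0))"
      proof (rule sum.cong[OF refl])
        fix a :: 'a assume "a \<in> UNIV - {0}"
        then have a: "a \<noteq> 0" by simp
        have "(v$i = a * v$j) = (a = v$i / v$j)" using vj by (auto simp: field_simps)
        then show "\<mu>1 (scl j a v) = (1-p) * (if v$i = 0 then C else 0) + p * (if a = v$i / v$j then C else 0)"
          using New_facts[OF a ij insert.hyps(2), of v] True by (simp add: mu1)
      qed
      also have "\<dots> = (1-p) * (if v$i = 0 then C else 0) * N + p * (if v$i \<noteq> 0 then C else 0)"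
      proof -
        have "(\<Sum>a\<in>UNIV - {0::'a}. (if a = v$i / v$j then C else 0)) = (if v$i \<noteq> 0 then C else 0)"
          using vj by (simp add: sum.delta')
        then show ?thesis
          by (simp add: sum.distrib sum_distrib_left[symmetric] cardN N_def)
      qed
      also have "\<dots> = (if v$i = 0 then C * ((1-p) * N) else p * C)" by (simp add: mult_ac)
      also have "\<dots> = p * C"
      proof -
        have pe: "(1-p) * N = p" using Npos by (simp add: p_def field_simps)
        show ?thesis unfolding pe by (simp add: mult_ac)
      qed
      finally show ?thesis using True by simp
    qed
    have "run w' (dl (ev j)) v = (if v \<in> Nw j (insert i M) then C / (N + 1) else 0)" for v
    proof -
      have "run w' (dl (ev j)) v = (1 / 2^m) * (\<Sum>a\<in>UNIV - {0}. \<mu>1 (scl j a v))"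
        unfolding w'_def run_append \<mu>1_def[symmetric] by (rule run_Scw[OF assms(1,2)])
      also have "\<dots> = (if v \<in> Nw j (insert i M) then C / (N + 1) else 0)"
        unfolding main using Npos by (auto simp: p_def N_def field_simps)
      finally show ?thesis .
    qed
    moreover have "C / (N + 1) > 0" using C Npos by simp
    ultimately show ?case using w'props by blast
  qed
qed


section \<open>Spreading over an orbit\<close>

definition Fixs :: "'n set \<Rightarrow> ('a::field^'n^'n) set" where
  "Fixs S = {A. invertible A \<and> (\<forall>s\<in>S. A *v ev s = ev s)}"

definition Ob :: "'n set \<Rightarrow> 'n set \<Rightarrow> ('a::field^'n) set" where
  "Ob F M = {v. (\<forall>s. s \<notin> M \<longrightarrow> v$s = 0) \<and> (\<exists>s\<in>M - F. v$s \<noteq> 0)}"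

lemma ev_comp: "ev s $ r = (if r = s then 1 else 0)"
  by (simp add: ev_def)

lemma Gen_Fixs:
  assumes "g \<in> Gen j" "j \<notin> S" shows "g \<in> Fixs S"
proof -
  have i: "invertible g" and f: "\<And>u. u$j = 0 \<Longrightarrow> g *v u = u" using assms(1) by (auto simp: Gen_def)
  have "g *v ev s = ev s" if "s \<in> S" for s
  proof (rule f)
    show "ev s $ j = 0" using that assms(2) by (auto simp: ev_comp)
  qed
  then show ?thesis using i by (simp add: Fixs_def)
qed

lemma Fixs_anti: "S \<subseteq> T \<Longrightarrow> g \<in> Fixs T \<Longrightarrow> g \<in> Fixs S"
  unfolding Fixs_def by auto

lemma Pm_ev: "(Pm i j :: 'a::field^'n^'n) *v ev s = ev (swp i j s)"
  by (simp add: Pm_mult ev_def vec_eq_iff swp_def)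

lemma Pm_Fixs:
  assumes "i \<notin> S" "j \<notin> S"
  shows "(Pm i j :: 'a::field^'n^'n) \<in> Fixs S"
  using assms Pm_inv(1) unfolding Fixs_def by (auto simp: Pm_ev swp_def)

lemma Gen_inv_act:
  fixes g :: "'a::field^'n^'n"
  assumes "g \<in> Gen j" "(matrix_inv g *v v)$j = 0 \<or> v$j = 0"
  shows "matrix_inv g *v v = v"
proof -
  have i: "invertible g" and f: "\<And>u. u$j = 0 \<Longrightarrow> g *v u = u" using assms(1) by (auto simp: Gen_def)
  show ?thesis
  proof (cases "(matrix_inv g *v v)$j = 0")
    case True
    then have "g *v (matrix_inv g *v v) = matrix_inv g *v v" by (rule f)
    then show ?thesis using matrix_inv_cancel(2)[OF i] by simp
  next
    case False
    then have "v$j = 0" using assms(2) by simp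
    then have "g *v v = v" by (rule f)
    then show ?thesis using matrix_inv_cancel(1)[OF i, of v] by simp
  qed
qed

lemma Ob_insert:
  assumes "j \<notin> F" "j \<notin> M"
  shows "(v \<in> Ob F (insert j M)) = (v \<in> Ob F M \<or> v \<in> Nw j M)"
    and "\<not> (v \<in> Ob F M \<and> v \<in> Nw j M)"
proof -
  show "(v \<in> Ob F (insert j M)) = (v \<in> Ob F M \<or> v \<in> Nw j M)"
  proof
    assume h: "v \<in> Ob F (insert j M)"
    show "v \<in> Ob F M \<or> v \<in> Nw j M"
    proof (cases "v$j = 0")
      case True
      have "\<forall>s. s \<notin> M \<longrightarrow> v$s = 0" using h True unfolding Ob_def by auto
      moreover obtain s where "s \<in> insert j M - F" "v$s \<noteq> 0" using h unfolding Ob_def by auto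
      then have "s \<in> M - F" "v$s \<noteq> 0" using True by auto
      ultimately show ?thesis unfolding Ob_def by blast
    next
      case False
      then show ?thesis using h unfolding Ob_def Nw_def by auto
    qed
  next
    assume "v \<in> Ob F M \<or> v \<in> Nw j M"
    then show "v \<in> Ob F (insert j M)"
    proof
      assume h: "v \<in> Ob F M"
      then obtain s where "s \<in> M - F" "v$s \<noteq> 0" unfolding Ob_def by auto
      then show ?thesis using h unfolding Ob_def by auto
    next
      assume h: "v \<in> Nw j M"
      then have "j \<in> insert j M - F" "v$j \<noteq> 0" using assms unfolding Nw_def by auto
      then show ?thesis using h unfolding Ob_def Nw_def by auto
    qed
  qed
  show "\<not> (v \<in> Ob F M \<and> v \<in> Nw j M)" using assms unfolding Ob_def Nw_def by auto
qed

lemma Ob_jzero: "j \<notin> M \<Longrightarrow> v \<in> Ob F M \<Longrightarrow> v$j = 0"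
  unfolding Ob_def by auto

lemma Orb:
  fixes \<gamma> :: "'a::{field,finite}" and c :: "'n::finite"
  assumes "\<gamma> \<noteq> 0" "bij_betw (\<lambda>e. \<gamma>^e) {..<2^m} (UNIV - {0})" "c \<notin> F"
    and "M' \<inter> (F \<union> {c}) = {}"
  shows "\<exists>w::(('a^'n^'n) \<times> real) list.
           (\<forall>gp\<in>set w. fst gp \<in> Fixs (F \<union> - (F \<union> {c} \<union> M')) \<and> 0 \<le> snd gp \<and> snd gp \<le> 1) \<and>
           (\<exists>C>0. \<forall>v. run w (dl (ev c)) v = (if v \<in> Ob F (F \<union> {c} \<union> M') then C else 0))"
proof -
  have fin: "finite M'" by simp
  show ?thesis using fin assms(4)
  proof (induction M' rule: finite_induct)
    case empty
    obtain w :: "(('a^'n^'n) \<times> real) list" and C :: real where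
      w: "\<forall>gp\<in>set w. fst gp \<in> Gen c \<and> 0 \<le> snd gp \<and> snd gp \<le> 1"
      and C: "C > 0" and rw: "\<forall>v. run w (dl (ev c)) v = (if v \<in> Nw c F then C else 0)"
      using New[OF assms(1,2,3)] by blast
    have "\<forall>gp\<in>set w. fst gp \<in> Fixs (F \<union> - (F \<union> {c} \<union> {})) \<and> 0 \<le> snd gp \<and> snd gp \<le> 1"
      using w assms(3) Gen_Fixs by fastforce
    moreover have "Nw c F = (Ob F (F \<union> {c} \<union> {}) :: ('a^'n) set)"
      using assms(3) unfolding Nw_def Ob_def by auto
    ultimately have "\<forall>gp\<in>set w. fst gp \<in> Fixs (F \<union> - (F \<union> {c} \<union> {})) \<and> 0 \<le> snd gp \<and> snd gp \<le> 1"
      "\<forall>v. run w (dl (ev c)) v = (if v \<in> Ob F (F \<union> {c} \<union> {}) then C else 0)"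
      using rw by auto
    then show ?case using C by (intro exI[of _ w]) blast
  next
    case (insert j M')
    define M where "M = F \<union> {c} \<union> M'"
    have jF: "j \<notin> F" and jc: "j \<noteq> c" and jM: "j \<notin> M" and cM: "c \<in> M" and FM: "F \<subseteq> M"
      using insert.prems insert.hyps(2) by (auto simp: M_def)
    have disj: "M' \<inter> (F \<union> {c}) = {}" using insert.prems by auto
    have eqM: "F \<union> {c} \<union> insert j M' = insert j M" by (auto simp: M_def)
    obtain w0 :: "(('a^'n^'n) \<times> real) list" and C1 :: real where
      w0: "\<forall>gp\<in>set w0. fst gp \<in> Fixs (F \<union> - M) \<and> 0 \<le> snd gp \<and> snd gp \<le> 1"
      and C1: "C1 > 0" and rw0: "\<forall>v. run w0 (dl (ev c)) v = (if v \<in> Ob F M then C1 else 0)"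
      using insert.IH[OF disj] unfolding M_def by blast
    obtain wn :: "(('a^'n^'n) \<times> real) list" and C2 :: real where
      wn: "\<forall>gp\<in>set wn. fst gp \<in> Gen j \<and> 0 \<le> snd gp \<and> snd gp \<le> 1"
      and C2: "C2 > 0" and rwn: "\<forall>v. run wn (dl (ev j)) v = (if v \<in> Nw j M then C2 else 0)"
      using New[OF assms(1,2) jM] by blast
    define p where "p = C1 / (C1 + C2)"
    have p01: "0 \<le> p" "p \<le> 1" using C1 C2 by (auto simp: p_def)
    define w' where "w' = wn @ w0 @ [(Pm c j, p)]"
    have props: "\<forall>gp\<in>set w'. fst gp \<in> Fixs (F \<union> - (insert j M)) \<and> 0 \<le> snd gp \<and> snd gp \<le> 1"
    proof
      fix gp assume "gp \<in> set w'"
      then consider "gp \<in> set wn" | "gp \<in> set w0" | "gp = (Pm c j, p)" by (auto simp: w'_def)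
      then show "fst gp \<in> Fixs (F \<union> - (insert j M)) \<and> 0 \<le> snd gp \<and> snd gp \<le> 1"
      proof cases
        case 1 then show ?thesis using wn jF Gen_Fixs[of "fst gp" j] by auto
      next
        case 2 then show ?thesis using w0 Fixs_anti[of "F \<union> - (insert j M)" "F \<union> - M"] by auto
      next
        case 3 then show ?thesis using p01 Pm_Fixs[of c "F \<union> - (insert j M)" j] assms(3) cM jF by auto
      qed
    qed
    have Pinv: "matrix_inv (Pm c j :: 'a^'n^'n) = Pm c j" by (rule Pm_inv(2))
    have Pev: "((Pm c j :: 'a^'n^'n) *v z = ev c) = (z = ev j)" for z
    proof
      assume "Pm c j *v z = ev c"
      then have "Pm c j *v (Pm c j *v z) = Pm c j *v ev c" by simp
      moreover have "(Pm c j :: 'a^'n^'n) *v (Pm c j *v z) = z" by (simp add: Pm_mult vec_eq_iff)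
      ultimately show "z = ev j" by (simp add: Pm_ev swp_def)
    next
      assume "z = ev j" then show "Pm c j *v z = ev c" by (simp add: Pm_ev swp_def)
    qed
    have s1: "run [(Pm c j :: 'a^'n^'n, p)] (dl (ev c)) = (\<lambda>z. (1-p) * dl (ev c) z + p * dl (ev j) z)"
      by (simp add: fun_eq_iff Pinv Pev dl_def)
    have fixj: "\<forall>gp\<in>set w0. invertible (fst gp) \<and> fst gp *v ev j = ev j"
      using w0 jM unfolding Fixs_def by auto
    have s2: "run w0 (run [(Pm c j :: 'a^'n^'n, p)] (dl (ev c))) = (\<lambda>z. (1-p) * (if z \<in> Ob F M then C1 else 0) + p * dl (ev j) z)"
      unfolding s1 fun_eq_iff using rw0 run_fixed[OF fixj] by (simp add: run_linear dl_def)
    have inv_ob: "\<forall>gp\<in>set wn. \<forall>v. (if matrix_inv (fst gp) *v v \<in> Ob F M then C1 else 0) = (if v \<in> Ob F M then C1 else 0)"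
    proof (intro ballI allI)
      fix gp v assume "gp \<in> set wn"
      then have g: "fst gp \<in> Gen j" using wn by auto
      have "(matrix_inv (fst gp) *v v \<in> Ob F M) = (v \<in> Ob F M)"
        using Gen_inv_act[OF g] Ob_jzero[OF jM] by metis
      then show "(if matrix_inv (fst gp) *v v \<in> Ob F M then C1 else 0) = (if v \<in> Ob F M then C1 else 0)" by simp
    qed
    have s3: "run w' (dl (ev c)) v = (1-p) * (if v \<in> Ob F M then C1 else 0) + p * (if v \<in> Nw j M then C2 else 0)" for v
      unfolding w'_def run_append s2 run_linear
      using run_invariant[OF inv_ob, of v] rwn by simp
    define C where "C = C1 * C2 / (C1 + C2)"
    have Cpos: "C > 0" using C1 C2 by (simp add: C_def)
    have e1: "(1-p) * C1 = C" using C1 C2 by (simp add: p_def C_def field_simps)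
    have e2: "p * C2 = C" using C1 C2 by (simp add: p_def C_def field_simps)
    have "run w' (dl (ev c)) v = (if v \<in> Ob F (insert j M) then C else 0)" for v
      unfolding s3 using Ob_insert[OF jF jM, of v] e1 e2 by auto
    then show ?case using props Cpos unfolding eqM by blast
  qed
qed


section \<open>The chain of stabilisers\<close>

lemma Fixs_subgroup: "subgroup (Fixs S) (GL_group :: ('a::field^'n^'n) monoid)"
proof (rule group.subgroupI[OF GL_is_group])
  show "Fixs S \<subseteq> carrier (GL_group :: ('a::field^'n^'n) monoid)" by (auto simp: Fixs_def)
  show "Fixs S \<noteq> {}" using invertible_one by (auto simp: Fixs_def)
next
  fix a :: "'a^'n^'n" assume a: "a \<in> Fixs S"
  then have i: "invertible a" by (simp add: Fixs_def)
  have "matrix_inv a *v ev s = ev s" if "s \<in> S" for s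
    using a that matrix_inv_cancel(1)[OF i, of "ev s"] by (simp add: Fixs_def)
  then show "inv\<^bsub>GL_group\<^esub> a \<in> Fixs S"
    using GL_inv[OF i] invertible_matrix_inv[OF i] by (simp add: Fixs_def)
next
  fix a b :: "'a^'n^'n" assume "a \<in> Fixs S" "b \<in> Fixs S"
  then show "a \<otimes>\<^bsub>GL_group\<^esub> b \<in> Fixs S"
    by (auto simp: Fixs_def invertible_mult matrix_vector_mul_assoc[symmetric])
qed

lemma col_ev: "(A *v ev s) $ r = A $ r $ s"
  unfolding matrix_vector_mult_def ev_def
  by (simp add: if_distrib[of "\<lambda>x. _ * x"] sum.delta cong: if_cong)

lemma Fixs_UNIV: "Fixs UNIV = {mat 1 :: 'a::field^'n^'n}"
proof
  show "Fixs UNIV \<subseteq> {mat 1 :: 'a::field^'n^'n}"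
  proof
    fix A :: "'a^'n^'n" assume "A \<in> Fixs UNIV"
    then have "A *v ev s = ev s" for s by (simp add: Fixs_def)
    then have "A $ r $ s = (if r = s then 1 else 0)" for r s using col_ev[of A s r] by (simp add: ev_comp)
    then have "A = mat 1" by (simp add: vec_eq_iff mat_def)
    then show "A \<in> {mat 1}" by simp
  qed
  show "{mat 1 :: 'a::field^'n^'n} \<subseteq> Fixs UNIV" using invertible_one by (simp add: Fixs_def)
qed

lemma Fixs_Ob:
  fixes A :: "'a::field^'n^'n"
  assumes "A \<in> Fixs F" "c \<notin> F"
  shows "A *v ev c \<in> Ob F UNIV"
proof (rule ccontr)
  assume "A *v ev c \<notin> Ob F UNIV"
  define v where "v = A *v ev c"
  have v0: "v $ s = 0" if "s \<notin> F" for s using \<open>A *v ev c \<notin> Ob F UNIV\<close> that by (auto simp: Ob_def v_def)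
  have i: "invertible A" and fx: "\<And>s. s \<in> F \<Longrightarrow> A *v ev s = ev s" using assms(1) by (auto simp: Fixs_def)
  have colF: "A $ r $ t = (if r = t then 1 else 0)" if "t \<in> F" for r t
    using col_ev[of A t r] fx[OF that] by (simp add: ev_comp)
  have colc: "A $ r $ c = v $ r" for r using col_ev[of A c r] by (simp add: v_def)
  define x :: "'a^'n" where "x = (\<chi> t. if t = c then 1 else if t \<in> F then - v$t else 0)"
  have "(A *v x) $ r = 0" for r
  proof -
    have "(A *v x) $ r = (\<Sum>t\<in>UNIV. A $ r $ t * x $ t)" by (simp add: matrix_vector_mult_def)
    also have "\<dots> = (\<Sum>t\<in>UNIV. (if t = c then v $ r else 0) + (if t = r \<and> r \<in> F then - v $ r else 0))"
      by (rule sum.cong[OF refl]) (use assms(2) colF colc in \<open>auto simp: x_def\<close>)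
    also have "\<dots> = v $ r + (if r \<in> F then - v $ r else 0)"
      by (simp add: sum.distrib)
    also have "\<dots> = 0" using v0 by auto
    finally show ?thesis .
  qed
  then have "A *v x = 0" by (simp add: vec_eq_iff)
  then have "x = 0" using matrix_inv_cancel(1)[OF i, of x] by simp
  moreover have "x $ c = 1" by (simp add: x_def)
  ultimately show False by simp
qed

lemma chain_step:
  fixes W R :: "(('a::{field,finite}^'n^'n) \<times> real) list" and e :: "'a^'n"
  assumes W: "\<forall>gp\<in>set W. fst gp \<in> Fixs F" and R: "\<forall>gp\<in>set R. invertible (fst gp)"
    and c: "c \<notin> F"
    and rW: "\<forall>v. run W (dl (ev c)) v = (if v \<in> Ob F UNIV then C else 0)"
    and rR: "\<forall>B\<in>{A. invertible A}. wdist GL_group R B = (if B \<in> Fixs (insert c F) then c0 else 0)"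
    and A: "invertible A"
  shows "wdist GL_group (W @ R) A = (if A \<in> Fixs F then c0 * C else 0)"
proof -
  interpret GL: group "GL_group :: ('a^'n^'n) monoid" by (rule GL_is_group)
  have sub: "subgroup (Fixs F) (GL_group :: ('a^'n^'n) monoid)" by (rule Fixs_subgroup)
  have Wi: "\<forall>gp\<in>set W. invertible (fst gp)" using W by (auto simp: Fixs_def)
  have "wdist GL_group (W @ R) A = (\<Sum>y\<in>{A. invertible A}. wdist GL_group W y * wdist GL_group R (matrix_inv y ** A))"
  proof -
    have "wdist GL_group (W @ R) A = (\<Sum>y\<in>carrier GL_group. wdist GL_group W y * wdist GL_group R (inv\<^bsub>GL_group\<^esub> y \<otimes>\<^bsub>GL_group\<^esub> A))"
      by (rule GL.wdist_append) (use Wi R A in auto)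
    also have "\<dots> = (\<Sum>y\<in>{A. invertible A}. wdist GL_group W y * wdist GL_group R (matrix_inv y ** A))"
      by (rule sum.cong) (auto simp: GL_inv)
    finally show ?thesis .
  qed
  also have "\<dots> = (\<Sum>y\<in>{A. invertible A}. wdist GL_group W y * (if matrix_inv y ** A \<in> Fixs (insert c F) then c0 else 0))"
    by (rule sum.cong[OF refl]) (use rR A in \<open>auto simp: invertible_mult invertible_matrix_inv\<close>)
  finally have e1: "wdist GL_group (W @ R) A = \<dots>" .
  have supp: "y \<in> Fixs F" if "invertible y" "wdist GL_group W y \<noteq> 0" for y
    using GL.wdist_support[OF sub W that(2)] that(1) by simp
  show ?thesis
  proof (cases "A \<in> Fixs F")
    case True
    have "(\<Sum>y\<in>{A. invertible A}. wdist GL_group W y * (if matrix_inv y ** A \<in> Fixs (insert c F) then c0 else 0))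
        = (\<Sum>y\<in>{A. invertible A}. c0 * (if y *v ev c = A *v ev c then wdist GL_group W y else 0))"
    proof (rule sum.cong[OF refl])
      fix y :: "'a^'n^'n" assume y: "y \<in> {A. invertible A}"
      show "wdist GL_group W y * (if matrix_inv y ** A \<in> Fixs (insert c F) then c0 else 0)
          = c0 * (if y *v ev c = A *v ev c then wdist GL_group W y else 0)"
      proof (cases "wdist GL_group W y = 0")
        case True then show ?thesis by simp
      next
        case False
        then have yF: "y \<in> Fixs F" using supp y by simp
        have yi: "invertible y" using y by simp
        have BF: "matrix_inv y ** A \<in> Fixs F"
          using subgroup.m_closed[OF sub subgroup.m_inv_closed[OF sub yF] \<open>A \<in> Fixs F\<close>] GL_inv[OF yi] by simp
        have "(matrix_inv y ** A \<in> Fixs (insert c F)) = ((matrix_inv y ** A) *v ev c = ev c)"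
          using BF by (auto simp: Fixs_def)
        also have "\<dots> = (y *v ev c = A *v ev c)"
          using matrix_inv_cancel[OF yi] by (metis matrix_vector_mul_assoc)
        finally show ?thesis by simp
      qed
    qed
    also have "\<dots> = c0 * run W (dl (ev c)) (A *v ev c)"
      using vd_run[OF Wi, of "ev c" "A *v ev c"] by (simp add: sum_distrib_left[symmetric] dl_def)
    also have "\<dots> = c0 * C" using rW Fixs_Ob[OF True c] by simp
    finally show ?thesis using e1 True by simp
  next
    case False
    have "wdist GL_group W y * (if matrix_inv y ** A \<in> Fixs (insert c F) then c0 else 0) = 0"
      if y: "y \<in> {A. invertible A}" for y
    proof (cases "wdist GL_group W y = 0")
      case True then show ?thesis by simp
    next
      case nz: False
      then have yF: "y \<in> Fixs F" using supp y by simp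
      have yi: "invertible y" using y by simp
      have "matrix_inv y ** A \<notin> Fixs (insert c F)"
      proof
        assume "matrix_inv y ** A \<in> Fixs (insert c F)"
        then have "matrix_inv y ** A \<in> Fixs F" using Fixs_anti[of F "insert c F"] by blast
        then have "y ** (matrix_inv y ** A) \<in> Fixs F"
          using subgroup.m_closed[OF sub yF] by simp
        then show False using False matrix_inv_props(1)[OF yi] by (simp add: matrix_mul_assoc)
      qed
      then show ?thesis by simp
    qed
    then have "(\<Sum>y\<in>{A. invertible A}. wdist GL_group W y * (if matrix_inv y ** A \<in> Fixs (insert c F) then c0 else 0)) = 0"
      by (intro sum.neutral ballI) blast
    then show ?thesis using e1 False by simp
  qed
qed


section \<open>Sufficiency\<close>

lemma mixable_from_word:
  assumes G: "group G"
    and w: "\<forall>gp\<in>set w. fst gp \<in> carrier G \<and> 0 \<le> snd gp \<and> snd gp \<le> 1"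
    and u: "\<forall>x\<in>carrier G. wdist G w x = 1 / real (card (carrier G))"
  shows "mixable G"
proof -
  define k where "k = length w"
  define gs where "gs = (\<lambda>i. fst (w ! i))"
  define ps where "ps = (\<lambda>i. snd (w ! i))"
  have mw: "map (\<lambda>i. (gs i, ps i)) [0..<k] = w"
    unfolding gs_def ps_def k_def by (rule nth_equalityI) simp_all
  have gsc: "\<forall>i<k. gs i \<in> carrier G \<and> 0 \<le> ps i \<and> ps i \<le> 1"
  proof (intro allI impI)
    fix i assume "i < k"
    then have "w ! i \<in> set w" unfolding k_def by (rule nth_mem)
    then show "gs i \<in> carrier G \<and> 0 \<le> ps i \<and> ps i \<le> 1" using w unfolding gs_def ps_def by blast
  qed
  have "\<forall>x\<in>carrier G.
         (\<Sum>S\<in>Pow {..<k}. if word_prod G gs k S = x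
                             then (\<Prod>i<k. if i \<in> S then ps i else 1 - ps i) else 0)
         = 1 / real (card (carrier G))"
  proof
    fix x assume x: "x \<in> carrier G"
    have "\<forall>i<k. gs i \<in> carrier G" using gsc by blast
    from group.sum_eq_wdist[OF G this x, of ps] show "(\<Sum>S\<in>Pow {..<k}. if word_prod G gs k S = x
                             then (\<Prod>i<k. if i \<in> S then ps i else 1 - ps i) else 0)
         = 1 / real (card (carrier G))"
      using u x unfolding mw by simp
  qed
  then show ?thesis unfolding mixable_def
    by (intro exI[of _ k] exI[of _ gs] exI[of _ ps] conjI) (use gsc in simp_all)
qed

lemma distinct_nth_notin_take:
  assumes "distinct xs" "k < length xs"
  shows "xs ! k \<notin> set (take k xs)"
proof -
  have "distinct (take (Suc k) xs)" using assms(1) by simp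
  then show ?thesis unfolding take_Suc_conv_app_nth[OF assms(2)] by simp
qed

lemma sufficiency:
  fixes \<gamma> :: "'a::{field,finite}"
  assumes "\<gamma> \<noteq> 0" "bij_betw (\<lambda>e. \<gamma>^e) {..<2^m} (UNIV - {0})"
  shows "mixable (GL_group :: ('a^'n::finite^'n) monoid)"
proof -
  obtain xs :: "'n list" where xs: "distinct xs" "set xs = UNIV"
    using finite_distinct_list[of "UNIV :: 'n set"] by auto
  define d where "d = length xs"
  have lvl: "\<forall>k\<in>{..<d}. \<exists>w::(('a^'n^'n) \<times> real) list.
      (\<forall>gp\<in>set w. fst gp \<in> Fixs (set (take k xs)) \<and> 0 \<le> snd gp \<and> snd gp \<le> 1) \<and>
      (\<exists>C. \<forall>v. run w (dl (ev (xs!k))) v = (if v \<in> Ob (set (take k xs)) UNIV then C else 0))"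
  proof
    fix k assume "k \<in> {..<d}"
    then have k: "k < length xs" by (simp add: d_def)
    define F where "F = set (take k xs)"
    define c where "c = xs ! k"
    have cF: "c \<notin> F" unfolding F_def c_def by (rule distinct_nth_notin_take[OF xs(1) k])
    have disj: "- (F \<union> {c}) \<inter> (F \<union> {c}) = {}" by auto
    have U: "F \<union> {c} \<union> - (F \<union> {c}) = UNIV" by auto
    have U2: "F \<union> - (F \<union> {c} \<union> - (F \<union> {c})) = F" by auto
    have "\<exists>w::(('a^'n^'n) \<times> real) list.
           (\<forall>gp\<in>set w. fst gp \<in> Fixs (F \<union> - (F \<union> {c} \<union> - (F \<union> {c}))) \<and> 0 \<le> snd gp \<and> snd gp \<le> 1) \<and>
           (\<exists>C>0. \<forall>v. run w (dl (ev c)) v = (if v \<in> Ob F (F \<union> {c} \<union> - (F \<union> {c})) then C else 0))"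
      by (rule Orb[OF assms cF disj])
    then have "\<exists>w::(('a^'n^'n) \<times> real) list.
           (\<forall>gp\<in>set w. fst gp \<in> Fixs F \<and> 0 \<le> snd gp \<and> snd gp \<le> 1) \<and>
           (\<exists>C>0. \<forall>v. run w (dl (ev c)) v = (if v \<in> Ob F UNIV then C else 0))"
      by (simp only: U Compl_UNIV_eq Un_empty_right)
    then show "\<exists>w::(('a^'n^'n) \<times> real) list.
      (\<forall>gp\<in>set w. fst gp \<in> Fixs (set (take k xs)) \<and> 0 \<le> snd gp \<and> snd gp \<le> 1) \<and>
      (\<exists>C. \<forall>v. run w (dl (ev (xs!k))) v = (if v \<in> Ob (set (take k xs)) UNIV then C else 0))"
      unfolding F_def c_def by blast
  qed
  then have "\<exists>Wf::nat \<Rightarrow> (('a^'n^'n) \<times> real) list. \<forall>k\<in>{..<d}.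
      (\<forall>gp\<in>set (Wf k). fst gp \<in> Fixs (set (take k xs)) \<and> 0 \<le> snd gp \<and> snd gp \<le> 1) \<and>
      (\<exists>C. \<forall>v. run (Wf k) (dl (ev (xs!k))) v = (if v \<in> Ob (set (take k xs)) UNIV then C else 0))"
    by (rule bchoice)
  then obtain Wf :: "nat \<Rightarrow> (('a^'n^'n) \<times> real) list" where Wf: "\<forall>k\<in>{..<d}.
      (\<forall>gp\<in>set (Wf k). fst gp \<in> Fixs (set (take k xs)) \<and> 0 \<le> snd gp \<and> snd gp \<le> 1) \<and>
      (\<exists>C. \<forall>v. run (Wf k) (dl (ev (xs!k))) v = (if v \<in> Ob (set (take k xs)) UNIV then C else 0))"
    by (rule exE)
  define R where "R k = concat (map Wf [k..<d])" for k
  have Rprops: "\<forall>gp\<in>set (R k). invertible (fst gp) \<and> 0 \<le> snd gp \<and> snd gp \<le> 1" for k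
  proof
    fix gp assume "gp \<in> set (R k)"
    then obtain i where i: "i \<in> set [k..<d]" "gp \<in> set (Wf i)" unfolding R_def by auto
    then have "i \<in> {..<d}" by simp
    then have "fst gp \<in> Fixs (set (take i xs)) \<and> 0 \<le> snd gp \<and> snd gp \<le> 1" using Wf i(2) by blast
    then show "invertible (fst gp) \<and> 0 \<le> snd gp \<and> snd gp \<le> 1" by (simp add: Fixs_def)
  qed
  have claim: "\<exists>c0. \<forall>B\<in>{A. invertible A}. wdist GL_group (R k) B = (if B \<in> Fixs (set (take k xs)) then c0 else 0)"
    if "k \<le> d" for k
    using that
  proof (induction k rule: inc_induct)
    case base
    have "R d = []" by (simp add: R_def)
    moreover have "Fixs (set (take d xs)) = {mat 1 :: 'a^'n^'n}" using xs(2) Fixs_UNIV by (simp add: d_def)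
    ultimately show ?case by (intro exI[of _ 1]) auto
  next
    case (step n)
    obtain c0 where c0: "\<forall>B\<in>{A. invertible A}. wdist GL_group (R (Suc n)) B = (if B \<in> Fixs (set (take (Suc n) xs)) then c0 else 0)"
      using step.IH by blast
    have n: "n < length xs" using step.hyps(2) by (simp add: d_def)
    obtain C where C: "\<forall>v. run (Wf n) (dl (ev (xs!n))) v = (if v \<in> Ob (set (take n xs)) UNIV then C else 0)"
      using Wf step.hyps(2) by blast
    have Wn: "\<forall>gp\<in>set (Wf n). fst gp \<in> Fixs (set (take n xs))" using Wf step.hyps(2) by blast
    have Rn: "R n = Wf n @ R (Suc n)" using step.hyps(2) by (simp add: R_def upt_conv_Cons)
    have ins: "set (take (Suc n) xs) = insert (xs!n) (set (take n xs))"
      using take_Suc_conv_app_nth[OF n] by simp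
    have "\<forall>B\<in>{A. invertible A}. wdist GL_group (R n) B = (if B \<in> Fixs (set (take n xs)) then c0 * C else 0)"
    proof
      fix B :: "'a^'n^'n" assume "B \<in> {A. invertible A}"
      then have B: "invertible B" by simp
      show "wdist GL_group (R n) B = (if B \<in> Fixs (set (take n xs)) then c0 * C else 0)"
        unfolding Rn
        by (rule chain_step[OF Wn _ distinct_nth_notin_take[OF xs(1) n] C _ B])
           (use Rprops c0 ins in auto)
    qed
    then show ?case by blast
  qed
  obtain c0 where c0: "\<forall>B\<in>{A. invertible A}. wdist GL_group (R 0) B = (if B \<in> Fixs (set (take 0 xs)) then c0 else 0)"
    using claim[of 0] by auto
  have F0: "Fixs (set (take 0 xs)) = {A :: 'a^'n^'n. invertible A}" by (simp add: Fixs_def)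
  have const: "\<forall>B\<in>carrier (GL_group :: ('a^'n^'n) monoid). wdist GL_group (R 0) B = c0"
    using c0 F0 by simp
  interpret GL: group "GL_group :: ('a^'n^'n) monoid" by (rule GL_is_group)
  have "(\<Sum>B\<in>carrier (GL_group :: ('a^'n^'n) monoid). wdist GL_group (R 0) B) = 1"
    by (rule GL.wdist_sum1) (use Rprops in auto)
  then have "(\<Sum>B\<in>carrier (GL_group :: ('a^'n^'n) monoid). c0) = 1"
    using const by (metis (mono_tags, lifting) sum.cong)
  then have "c0 * real (card (carrier (GL_group :: ('a^'n^'n) monoid))) = 1"
    by (simp only: sum_constant mult.commute)
  then have "\<forall>B\<in>carrier (GL_group :: ('a^'n^'n) monoid). wdist GL_group (R 0) B = 1 / real (card (carrier (GL_group :: ('a^'n^'n) monoid)))"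
    using const by (simp add: field_simps)
  then show ?thesis
    by (rule mixable_from_word[OF GL_is_group, rotated]) (use Rprops in auto)
qed


section \<open>Finite fields: a generator of the multiplicative group\<close>

definition ring_of_tc :: "'a::field ring" where
  "ring_of_tc = \<lparr>carrier = UNIV, monoid.mult = (\<lambda>x y. x * y), one = 1, zero = 0, add = (\<lambda>x y. x + y)\<rparr>"

lemma field_tc: "field (ring_of_tc :: 'a::field ring)"
proof -
  have "\<exists>y. x + y = 0" for x :: 'a
    using add.right_inverse by blast
  moreover have "x \<noteq> 0 \<Longrightarrow> \<exists>y. x * y = 1" for x :: 'a
    by (rule exI[of _ "inverse x"]) auto
  ultimately show ?thesis
    unfolding ring_of_tc_def using add.right_inverse
    by unfold_locales (auto simp: algebra_simps Units_def)
qed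

lemma card_field_ge2: "CARD('a::{field,finite}) \<ge> 2"
proof -
  have "card {0::'a, 1} \<le> CARD('a)" by (rule card_mono) auto
  then show ?thesis by simp
qed

lemma gen_exists:
  shows "\<exists>\<gamma>::'a::{field,finite}. \<gamma> \<noteq> 0 \<and> \<gamma> ^ (CARD('a) - 1) = 1 \<and>
           bij_betw (\<lambda>e. \<gamma>^e) {..<CARD('a) - 1} (UNIV - {0})"
proof -
  define R where "R = (ring_of_tc :: 'a ring)"
  interpret R: field R unfolding R_def by (rule field_tc)
  have fin: "finite (carrier R)" by simp
  obtain a where a: "a \<in> carrier (mult_of R)"
    and gen: "carrier (mult_of R) = {a[^]\<^bsub>R\<^esub>i | i::nat. i \<in> UNIV}"
    using R.finite_field_mult_group_has_gen[OF fin] by blast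
  have powR: "a [^]\<^bsub>R\<^esub> (i::nat) = a ^ i" for i
    by (induction i) (simp_all add: R_def ring_of_tc_def mult.commute)
  have cm: "carrier (mult_of R) = UNIV - {0}" by (simp add: R_def ring_of_tc_def)
  define N where "N = CARD('a) - 1"
  have cardN: "card (UNIV - {0::'a}) = N" by (simp add: N_def card_Diff_singleton)
  have N0: "N > 0" using card_field_ge2[where 'a='a] by (simp add: N_def)
  have a0: "a \<noteq> 0" using a by (simp add: R_def ring_of_tc_def)
  have aN: "a ^ N = 1"
  proof -
    interpret M: group "mult_of R" by (rule R.field_mult_group)
    have "a [^]\<^bsub>mult_of R\<^esub> order (mult_of R) = \<one>\<^bsub>mult_of R\<^esub>"
      by (rule M.pow_order_eq_1[OF a])
    moreover have "order (mult_of R) = N" unfolding order_def cm cardN ..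
    ultimately have "a [^]\<^bsub>R\<^esub> N = \<one>\<^bsub>R\<^esub>" by (simp add: nat_pow_mult_of)
    then have "a ^ N = \<one>\<^bsub>R\<^esub>" by (simp only: powR)
    moreover have "\<one>\<^bsub>R\<^esub> = (1::'a)" by (simp add: R_def ring_of_tc_def)
    ultimately show ?thesis by simp
  qed
  have pmod: "a ^ i = a ^ (i mod N)" for i
  proof -
    have "a ^ i = a ^ (N * (i div N) + i mod N)" by simp
    also have "\<dots> = (a ^ N) ^ (i div N) * a ^ (i mod N)" by (simp only: power_add power_mult)
    finally show ?thesis using aN by simp
  qed
  have img: "(\<lambda>e. a^e) ` {..<N} = UNIV - {0}"
  proof
    show "(\<lambda>e. a^e) ` {..<N} \<subseteq> UNIV - {0}" using a0 by auto
    show "UNIV - {0} \<subseteq> (\<lambda>e. a^e) ` {..<N}"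
    proof
      fix t :: 'a assume "t \<in> UNIV - {0}"
      then have "t \<in> carrier (mult_of R)" using cm by simp
      then have "t \<in> {a[^]\<^bsub>R\<^esub>i | i::nat. i \<in> UNIV}" by (simp only: gen)
      then obtain i :: nat where "t = a [^]\<^bsub>R\<^esub> i" by blast
      then have "t = a ^ (i mod N)" using pmod powR by simp
      moreover have "i mod N < N" using N0 by simp
      ultimately show "t \<in> (\<lambda>e. a^e) ` {..<N}" by auto
    qed
  qed
  have "inj_on (\<lambda>e. a^e) {..<N}"
    by (rule eq_card_imp_inj_on) (simp_all add: img cardN)
  then have "bij_betw (\<lambda>e. a^e) {..<N} (UNIV - {0})" using img by (simp add: bij_betw_def)
  then show ?thesis using a0 aN unfolding N_def by blast
qed

section \<open>Necessity\<close>

lemma mixable_to_word: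
  assumes G: "group G" and m: "mixable G"
  shows "\<exists>w. (\<forall>gp\<in>set w. fst gp \<in> carrier G \<and> 0 \<le> snd gp \<and> snd gp \<le> 1) \<and>
             (\<forall>x\<in>carrier G. wdist G w x = 1 / real (card (carrier G)))"
proof -
  obtain k gs ps where k: "\<forall>i<k. gs i \<in> carrier G \<and> 0 \<le> ps i \<and> ps i \<le> 1"
    and u: "\<forall>x\<in>carrier G.
         (\<Sum>S\<in>Pow {..<k}. if word_prod G gs k S = x
                             then (\<Prod>i<k. if i \<in> S then ps i else 1 - ps i) else 0)
         = 1 / real (card (carrier G))"
    using m unfolding mixable_def by blast
  define w where "w = map (\<lambda>i. (gs i, ps i)) [0..<k]"
  have "\<forall>i<k. gs i \<in> carrier G" using k by blast
  then have "\<forall>x\<in>carrier G. wdist G w x = 1 / real (card (carrier G))"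
  proof (intro ballI)
    fix x assume x: "x \<in> carrier G"
    assume gk: "\<forall>i<k. gs i \<in> carrier G"
    show "wdist G w x = 1 / real (card (carrier G))"
      using group.sum_eq_wdist[OF G gk x, of ps] u x unfolding w_def by simp
  qed
  moreover have "\<forall>gp\<in>set w. fst gp \<in> carrier G \<and> 0 \<le> snd gp \<and> snd gp \<le> 1"
    using k unfolding w_def by auto
  ultimately show ?thesis by blast
qed

lemma real_odd_pow_eq_1:
  fixes x :: real
  assumes "odd n" "x ^ n = 1"
  shows "x = 1"
proof -
  have n0: "n > 0" using assms(1) by (cases n) auto
  consider "x < 0" | "x = 1" | "0 \<le> x \<and> x < 1" | "x > 1" by linarith
  then show ?thesis
  proof cases
    case 1
    then have "x ^ n < 0" using assms(1) by (simp add: power_less_zero_eq)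
    then show ?thesis using assms(2) by simp
  next
    case 2 then show ?thesis .
  next
    case 3
    then have "x ^ n < 1 ^ n" using n0 by (intro power_strict_mono) auto
    then show ?thesis using assms(2) by simp
  next
    case 4
    then have "1 ^ n < x ^ n" using n0 by (intro power_strict_mono) auto
    then show ?thesis using assms(2) by simp
  qed
qed

lemma factor_nonzero:
  fixes z :: complex and p :: real
  assumes "odd r" "z ^ r = 1"
  shows "1 - of_real p + of_real p * z \<noteq> 0"
proof
  assume h: "1 - of_real p + of_real p * z = 0"
  have p0: "p \<noteq> 0" using h by auto
  define x where "x = (p - 1) / p"
  have e: "of_real p * z = of_real p - 1"
  proof -
    have "of_real p * z = (1 - of_real p + of_real p * z) + (of_real p - 1)" by simp
    then show ?thesis using h by simp
  qed
  have p0': "(of_real p :: complex) \<noteq> 0" using p0 by simp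
  have "z = (of_real p - 1) / of_real p" using e p0' by (simp add: eq_divide_eq mult.commute)
  then have "z = of_real x" by (simp add: x_def)
  then have "of_real (x ^ r) = (1::complex)" using assms(2) by simp
  then have "x ^ r = 1" by (metis of_real_eq_1_iff)
  then have "x = 1" using real_odd_pow_eq_1[OF assms(1)] by blast
  then have "z = 1" using \<open>z = of_real x\<close> by simp
  then show False using h by simp
qed

lemma pow2_or_odd_prime:
  fixes n :: nat
  assumes "n > 0" "\<forall>r. prime r \<and> r dvd n \<longrightarrow> even r"
  shows "\<exists>m. n = 2^m"
  using assms
proof (induction n rule: less_induct)
  case (less n)
  show ?case
  proof (cases "n = 1")
    case True then show ?thesis by (intro exI[of _ 0]) simp
  next
    case False
    then obtain p where p: "prime p" "p dvd n" using prime_factor_nat by blast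
    then have "even p" using less.prems by blast
    have "\<forall>m. m dvd p \<longrightarrow> m = 1 \<or> m = p" using p(1) by (simp add: prime_nat_iff)
    then have p2: "p = 2" using \<open>even p\<close> by fastforce
    then obtain k where k: "n = 2 * k" using p(2) by blast
    have k0: "k > 0" "k < n" using less.prems(1) k by auto
    have "\<forall>r. prime r \<and> r dvd k \<longrightarrow> even r" using less.prems(2) k by auto
    then obtain m where "k = 2^m" using less.IH[OF k0(2) k0(1)] by blast
    then show ?thesis using k by (intro exI[of _ "Suc m"]) simp
  qed
qed


lemma necessity:
  assumes mix: "mixable (GL_group :: ('a::{field,finite}^'n::finite^'n) monoid)"
  shows "\<exists>m. CARD('a) - 1 = 2^m"
proof (rule ccontr)
  assume np: "\<not> (\<exists>m. CARD('a) - 1 = 2^m)"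
  define N where "N = CARD('a) - 1"
  have N0: "N > 0" using card_field_ge2[where 'a='a] by (simp add: N_def)
  obtain r where r: "prime r" "r dvd N" "odd r"
    using pow2_or_odd_prime[OF N0] np unfolding N_def by blast
  have r3: "r \<ge> 3"
  proof -
    have "r \<ge> 2" using r(1) prime_ge_2_nat by blast
    moreover have "r \<noteq> 2" using r(3) by auto
    ultimately show ?thesis by simp
  qed
  have Nr: "N \<ge> r" using r(2) N0 by (simp add: dvd_imp_le)
  obtain \<gamma> :: 'a where g0: "\<gamma> \<noteq> 0" and gN: "\<gamma> ^ N = 1" and gb: "bij_betw (\<lambda>e. \<gamma>^e) {..<N} (UNIV - {0})"
    using gen_exists[where 'a='a] unfolding N_def by blast
  define dlog where "dlog t = inv_into {..<N} (\<lambda>e. \<gamma>^e) t" for t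
  have dlog1: "dlog t < N" "\<gamma> ^ (dlog t) = t" if "t \<noteq> 0" for t
  proof -
    have t: "t \<in> UNIV - {0}" using that by simp
    show "\<gamma> ^ (dlog t) = t" unfolding dlog_def by (rule bij_betw_inv_into_right[OF gb t])
    have "t \<in> (\<lambda>e. \<gamma>^e) ` {..<N}" using gb t by (simp add: bij_betw_def)
    then have "inv_into {..<N} (\<lambda>e. \<gamma>^e) t \<in> {..<N}" by (rule inv_into_into)
    then show "dlog t < N" unfolding dlog_def by simp
  qed
  have ginj: "i = j" if "i < N" "j < N" "\<gamma>^i = \<gamma>^j" for i j
    by (rule inj_onD[OF bij_betw_imp_inj_on[OF gb] that(3)]) (use that in simp_all)
  have pmod: "\<gamma> ^ i = \<gamma> ^ (i mod N)" for i
  proof -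
    have "\<gamma> ^ i = \<gamma> ^ (N * (i div N) + i mod N)" by simp
    also have "\<dots> = (\<gamma> ^ N) ^ (i div N) * \<gamma> ^ (i mod N)" by (simp only: power_add power_mult)
    finally show ?thesis using gN by simp
  qed
  have congr: "i mod N = j mod N" if "\<gamma>^i = \<gamma>^j" for i j
  proof (rule ginj)
    show "i mod N < N" "j mod N < N" using N0 by simp_all
    have "\<gamma>^(i mod N) = \<gamma>^i" by (rule pmod[symmetric])
    also have "\<dots> = \<gamma>^j" by (rule that)
    also have "\<dots> = \<gamma>^(j mod N)" by (rule pmod)
    finally show "\<gamma>^(i mod N) = \<gamma>^(j mod N)" .
  qed
  define \<omega> :: complex where "\<omega> = cis (2 * pi / real r)"
  have wr: "\<omega> ^ r = 1"
  proof -
    have "\<omega> ^ r = cis (real r * (2 * pi / real r))" unfolding \<omega>_def by (rule Complex.DeMoivre)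
    also have "real r * (2 * pi / real r) = 2 * pi" using r3 by simp
    finally show ?thesis by simp
  qed
  have wmod: "\<omega> ^ i = \<omega> ^ (i mod r)" for i
  proof -
    have "\<omega> ^ i = \<omega> ^ (r * (i div r) + i mod r)" by simp
    also have "\<dots> = (\<omega> ^ r) ^ (i div r) * \<omega> ^ (i mod r)" by (simp only: power_add power_mult)
    finally show ?thesis using wr by simp
  qed
  have w1: "\<omega> \<noteq> 1"
  proof -
    have "2 * pi / real r < pi" using r3 pi_gt_zero by (simp add: field_simps)
    moreover have "0 < 2 * pi / real r" using r3 pi_gt_zero by simp
    ultimately have "sin (2 * pi / real r) > 0" by (rule sin_gt_zero[rotated])
    then have "Im \<omega> \<noteq> 0" by (simp add: \<omega>_def)
    then show ?thesis by auto
  qed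
  define chr where "chr t = \<omega> ^ dlog t" for t
  have chimul: "chr (s * t) = chr s * chr t" if "s \<noteq> 0" "t \<noteq> 0" for s t
  proof -
    have "\<gamma> ^ dlog (s * t) = \<gamma> ^ (dlog s + dlog t)"
      using dlog1 that by (simp add: power_add)
    then have "dlog (s * t) mod N = (dlog s + dlog t) mod N" by (rule congr)
    then have "dlog (s * t) mod r = (dlog s + dlog t) mod r"
      by (metis mod_mod_cancel r(2))
    then have "\<omega> ^ dlog (s * t) = \<omega> ^ (dlog s + dlog t)" using wmod by metis
    then show ?thesis by (simp add: chr_def power_add)
  qed
  have chi1: "chr 1 = 1"
  proof -
    have "\<gamma> ^ dlog 1 = \<gamma> ^ 0" using dlog1[of 1] by simp
    then have "dlog 1 = 0" using ginj[of "dlog 1" 0] dlog1[of 1] N0 by simp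
    then show ?thesis by (simp add: chr_def)
  qed
  have chig: "chr \<gamma> = \<omega>"
  proof -
    have "\<gamma> ^ dlog \<gamma> = \<gamma> ^ 1" using dlog1[OF g0] by simp
    then have "dlog \<gamma> = 1" using ginj[of "dlog \<gamma>" 1] dlog1[OF g0] Nr r3 by simp
    then show ?thesis by (simp add: chr_def)
  qed
  define f where "f A = chr (det A)" for A :: "'a^'n^'n"
  have fmul: "f (A ** B) = f A * f B" if "invertible A" "invertible B" for A B
    using that chimul by (simp add: f_def det_mul invertible_det_nz)
  have f1: "f (mat 1) = 1" by (simp add: f_def chi1)
  interpret GL: group "GL_group :: ('a^'n^'n) monoid" by (rule GL_is_group)
  obtain w :: "(('a^'n^'n) \<times> real) list" where
    w: "\<forall>gp\<in>set w. fst gp \<in> carrier GL_group \<and> 0 \<le> snd gp \<and> snd gp \<le> 1"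
    and u: "\<forall>x\<in>carrier (GL_group :: ('a^'n^'n) monoid). wdist GL_group w x = 1 / real (card (carrier (GL_group :: ('a^'n^'n) monoid)))"
    using mixable_to_word[OF GL_is_group mix] by blast
  have E1: "(\<Sum>x\<in>carrier (GL_group :: ('a^'n^'n) monoid). of_real (wdist GL_group w x) * f x)
      = prod_list (map (\<lambda>(g,p). 1 - of_real p + of_real p * f g) w)"
    by (rule GL.wdist_expect) (use w f1 fmul in auto)
  define s0 :: 'n where "s0 = undefined"
  define B0 where "B0 = (Dm s0 \<gamma> :: 'a^'n^'n)"
  have B0i: "invertible B0" unfolding B0_def by (rule Dm_inv(1)[OF g0])
  have detB0: "det B0 = \<gamma>"
  proof -
    have "det B0 = (\<Prod>i\<in>UNIV. B0 $ i $ i)" by (rule det_diagonal) (simp add: B0_def Dm_def)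
    also have "\<dots> = (\<Prod>i\<in>UNIV. if i = s0 then \<gamma> else 1)" by (simp add: B0_def Dm_def)
    also have "\<dots> = \<gamma>" by (simp add: prod.delta)
    finally show ?thesis .
  qed
  have fB0: "f B0 = \<omega>" by (simp add: f_def detB0 chig)
  have Sf: "(\<Sum>A\<in>{A::'a^'n^'n. invertible A}. f A) = 0"
  proof -
    have "(\<Sum>A\<in>{A::'a^'n^'n. invertible A}. f A) = (\<Sum>A\<in>{A::'a^'n^'n. invertible A}. f (B0 ** A))"
      by (rule GL_reindex[OF B0i, symmetric])
    also have "\<dots> = (\<Sum>A\<in>{A::'a^'n^'n. invertible A}. \<omega> * f A)"
      by (rule sum.cong) (simp_all add: fmul B0i fB0)
    also have "\<dots> = \<omega> * (\<Sum>A\<in>{A::'a^'n^'n. invertible A}. f A)" by (simp add: sum_distrib_left)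
    finally have "(1 - \<omega>) * (\<Sum>A\<in>{A::'a^'n^'n. invertible A}. f A) = 0" by (simp add: algebra_simps)
    then show ?thesis using w1 by simp
  qed
  have E2: "(\<Sum>x\<in>carrier (GL_group :: ('a^'n^'n) monoid). of_real (wdist GL_group w x) * f x) = 0"
  proof -
    have "(\<Sum>x\<in>carrier (GL_group :: ('a^'n^'n) monoid). of_real (wdist GL_group w x) * f x)
        = (\<Sum>x\<in>{A::'a^'n^'n. invertible A}. of_real (1 / real (card {A::'a^'n^'n. invertible A})) * f x)"
      using u by (intro sum.cong) auto
    also have "\<dots> = of_real (1 / real (card {A::'a^'n^'n. invertible A})) * (\<Sum>x\<in>{A::'a^'n^'n. invertible A}. f x)"
      by (simp add: sum_distrib_left)
    finally show ?thesis using Sf by simp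
  qed
  have "prod_list (map (\<lambda>(g,p). 1 - of_real p + of_real p * f g) w) = 0" using E1 E2 by simp
  then have "0 \<in> set (map (\<lambda>(g,p). 1 - of_real p + of_real p * f g) w)" by (simp add: prod_list_zero_iff)
  then obtain g p where gp: "(g,p) \<in> set w" "1 - of_real p + of_real p * f g = 0" by auto
  have "invertible g" using w gp(1) by auto
  then have "det g \<noteq> 0" by (simp add: invertible_det_nz)
  have "f g ^ r = 1"
  proof -
    have "f g ^ r = (\<omega> ^ r) ^ dlog (det g)" by (simp add: f_def chr_def power_mult[symmetric] mult.commute)
    then show ?thesis using wr by simp
  qed
  then show False using factor_nonzero[OF r(3)] gp(2) by blast
qed

theorem mainTheorem7:
  shows "mixable (GL_group :: ('a::{field,finite} ^ 'n ^ 'n) monoid)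
         \<longleftrightarrow> (\<exists>m::nat. CARD('a) - 1 = 2 ^ m)"
proof
  assume "mixable (GL_group :: ('a::{field,finite} ^ 'n ^ 'n) monoid)"
  then show "\<exists>m::nat. CARD('a) - 1 = 2 ^ m" by (rule necessity)
next
  assume "\<exists>m::nat. CARD('a) - 1 = 2 ^ m"
  then obtain m where m: "CARD('a) - 1 = 2 ^ m" by blast
  obtain \<gamma> :: 'a where g0: "\<gamma> \<noteq> 0" and gb: "bij_betw (\<lambda>e. \<gamma>^e) {..<CARD('a) - 1} (UNIV - {0})"
    using gen_exists[where 'a='a] by blast
  show "mixable (GL_group :: ('a::{field,finite} ^ 'n ^ 'n) monoid)"
    by (rule sufficiency[OF g0]) (use gb m in simp)
qed

end
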